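(* Let $(W_1,\rho_1)$, $(W_2,\rho_2)$ be rational $\mathfrak{sl}(2)$-modules. Then $$\dim_{\mathbb{C}}\mathrm{Hom}_{\mathfrak{sl}(2)}(W_1,W_2)\le \mathrm{length}(W_1)\cdot\mathrm{length}(W_2).$$ Therefore the category $\mathcal R$ of rational $\mathfrak{sl}(2)$-modules is $\mathrm{Hom}_{\mathbb{C}}$-finite (all Hom spaces are finite-dimensional over $\mathbb{C}$).
   Context: $\mathfrak{sl}(2)$ has basis $L_{-1}=f$, $L_0=-\tfrac12 h$, $L_1=-e$ for a Chevalley basis $e,f,h$. An $\mathfrak{sl}(2)$-module is a $\mathbb{C}[z]$-module via $z\cdot v=L_0v$; it is rational if it is, with this structure, a finite-dimensional $\mathbb{C}(z)$-vector space. $\mathcal R$ is the full subcategory of rational modules. For a rational module $W$, $\mathrm{length}(W)$ is the maximal length of a filtration of $W$ by rational $\mathfrak{sl}(2)$-submodules (submodules that are $\mathbb{C}(z)$-subspaces). *)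

theory Defs
  imports Main "HOL-Library.Function_Algebras" "HOL-Computational_Algebra.Polynomial"
begin

text \<open>An sl(2)-module is a complex vector space (the whole type 'v, with scalar
multiplication s) together with the actions of a Chevalley basis e, f, h of sl(2),
given as C-linear maps satisfying [h,e] = 2e, [h,f] = -2f, [e,f] = h.\<close>

definition sl2_module ::
  "(complex \<Rightarrow> 'v::ab_group_add \<Rightarrow> 'v) \<Rightarrow> ('v \<Rightarrow> 'v) \<Rightarrow> ('v \<Rightarrow> 'v) \<Rightarrow> ('v \<Rightarrow> 'v) \<Rightarrow> bool" where
  "sl2_module s e f h \<longleftrightarrow>
     vector_space s \<and> Vector_Spaces.linear s s e \<and> Vector_Spaces.linear s s f \<and> Vector_Spaces.linear s s h \<and>
     (\<forall>v. h (e v) - e (h v) = s 2 (e v)) \<and>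
     (\<forall>v. h (f v) - f (h v) = - s 2 (f v)) \<and>
     (\<forall>v. e (f v) - f (e v) = h v)"

text \<open>The basis L_{-1} = f, L_0 = -1/2 h, L_1 = -e; we only need L_0.\<close>

definition L0 :: "(complex \<Rightarrow> 'v \<Rightarrow> 'v) \<Rightarrow> ('v \<Rightarrow> 'v) \<Rightarrow> 'v \<Rightarrow> 'v" where
  "L0 s h v = s (- 1/2) (h v)"

definition zact :: "(complex \<Rightarrow> 'v::ab_group_add \<Rightarrow> 'v) \<Rightarrow> ('v \<Rightarrow> 'v) \<Rightarrow> complex poly \<Rightarrow> 'v \<Rightarrow> 'v" where
  "zact s h p v = (\<Sum>i\<le>degree p. s (coeff p i) ((L0 s h ^^ i) v))"

text \<open>Rational module: the C[z]-structure extends to a C(z)-vector space structure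
(every nonzero polynomial acts bijectively, so C(z) acts by p(L_0) q(L_0)^{-1}),
and V is finite-dimensional over C(z): there is a finite set S such that every
v is a C(z)-linear combination of S, i.e. q(L_0) v = sum of p_x(L_0) x (x in S)
for some nonzero polynomial q and polynomials p_x.\<close>

definition rational_sl2_module ::
  "(complex \<Rightarrow> 'v::ab_group_add \<Rightarrow> 'v) \<Rightarrow> ('v \<Rightarrow> 'v) \<Rightarrow> ('v \<Rightarrow> 'v) \<Rightarrow> ('v \<Rightarrow> 'v) \<Rightarrow> bool" where
  "rational_sl2_module s e f h \<longleftrightarrow>
     sl2_module s e f h \<and>
     (\<forall>p. p \<noteq> 0 \<longrightarrow> bij (zact s h p)) \<and>
     (\<exists>S. finite S \<and>
        (\<forall>v. \<exists>q c. q \<noteq> 0 \<and> zact s h q v = (\<Sum>x\<in>S. zact s h (c x) x)))"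

text \<open>Rational submodule: a C-subspace stable under e, f, h which is a C(z)-subspace,
i.e. also stable under the inverses of the operators q(L_0), q nonzero.\<close>

definition rational_submodule ::
  "(complex \<Rightarrow> 'v::ab_group_add \<Rightarrow> 'v) \<Rightarrow> ('v \<Rightarrow> 'v) \<Rightarrow> ('v \<Rightarrow> 'v) \<Rightarrow> ('v \<Rightarrow> 'v) \<Rightarrow> 'v set \<Rightarrow> bool" where
  "rational_submodule s e f h U \<longleftrightarrow>
     module.subspace s U \<and> e ` U \<subseteq> U \<and> f ` U \<subseteq> U \<and> h ` U \<subseteq> U \<and>
     (\<forall>q v. q \<noteq> 0 \<longrightarrow> zact s h q v \<in> U \<longrightarrow> v \<in> U)"

definition rational_length ::
  "(complex \<Rightarrow> 'v::ab_group_add \<Rightarrow> 'v) \<Rightarrow> ('v \<Rightarrow> 'v) \<Rightarrow> ('v \<Rightarrow> 'v) \<Rightarrow> ('v \<Rightarrow> 'v) \<Rightarrow> nat" where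
  "rational_length s e f h =
     (GREATEST n. \<exists>U :: nat \<Rightarrow> 'v set. U 0 = {0} \<and> U n = UNIV \<and>
        (\<forall>i<n. U i \<subset> U (Suc i)) \<and> (\<forall>i\<le>n. rational_submodule s e f h (U i)))"

definition sl2_hom ::
  "(complex \<Rightarrow> 'v::ab_group_add \<Rightarrow> 'v) \<Rightarrow> ('v \<Rightarrow> 'v) \<Rightarrow> ('v \<Rightarrow> 'v) \<Rightarrow> ('v \<Rightarrow> 'v) \<Rightarrow>
   (complex \<Rightarrow> 'w::ab_group_add \<Rightarrow> 'w) \<Rightarrow> ('w \<Rightarrow> 'w) \<Rightarrow> ('w \<Rightarrow> 'w) \<Rightarrow> ('w \<Rightarrow> 'w) \<Rightarrow>
   ('v \<Rightarrow> 'w) set" where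
  "sl2_hom s1 e1 f1 h1 s2 e2 f2 h2 =
     {\<phi>. Vector_Spaces.linear s1 s2 \<phi> \<and> \<phi> \<circ> e1 = e2 \<circ> \<phi> \<and> \<phi> \<circ> f1 = f2 \<circ> \<phi> \<and> \<phi> \<circ> h1 = h2 \<circ> \<phi>}"

definition fun_scale :: "(complex \<Rightarrow> 'w \<Rightarrow> 'w) \<Rightarrow> complex \<Rightarrow> ('v \<Rightarrow> 'w) \<Rightarrow> 'v \<Rightarrow> 'w" where
  "fun_scale s2 c \<phi> = (\<lambda>x. s2 c (\<phi> x))"

end

theory Submission
  imports Defs "HOL-Computational_Algebra.Fraction_Field" "HOL-Computational_Algebra.Fundamental_Theorem_Algebra"
begin

lemma linearD:
  assumes "Vector_Spaces.linear s1 s2 g"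
  shows "g (x + y) = g x + g y" "g (s1 c x) = s2 c (g x)"
  using assms unfolding Vector_Spaces.linear_iff by auto

locale ratmod =
  fixes s :: "complex \<Rightarrow> 'v::ab_group_add \<Rightarrow> 'v" and e f h :: "'v \<Rightarrow> 'v"
  assumes rat: "rational_sl2_module s e f h"
begin

abbreviation "L \<equiv> L0 s h"
abbreviation "Z \<equiv> zact s h"

lemma sl2: "sl2_module s e f h" using rat unfolding rational_sl2_module_def by auto

lemma vs: "vector_space s" using sl2 unfolding sl2_module_def by auto

sublocale V: vector_space s by (rule vs)

lemma lin_e: "Vector_Spaces.linear s s e" and lin_f: "Vector_Spaces.linear s s f"
  and lin_h: "Vector_Spaces.linear s s h"
  using sl2 unfolding sl2_module_def by auto

lemma comm_he: "h (e v) - e (h v) = s 2 (e v)"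
  and comm_hf: "h (f v) - f (h v) = - s 2 (f v)"
  and comm_ef: "e (f v) - f (e v) = h v"
  using sl2 unfolding sl2_module_def by auto

lemma e_add: "e (x + y) = e x + e y" and e_scale: "e (s c x) = s c (e x)"
  using linearD[OF lin_e] by auto
lemma f_add: "f (x + y) = f x + f y" and f_scale: "f (s c x) = s c (f x)"
  using linearD[OF lin_f] by auto
lemma h_add: "h (x + y) = h x + h y" and h_scale: "h (s c x) = s c (h x)"
  using linearD[OF lin_h] by auto

lemma h_neg: "h (- x) = - h x" and e_neg: "e (- x) = - e x" and f_neg: "f (- x) = - f x"
proof -
  have m: "- x = s (-1) x" for x by (simp add: V.scale_minus_left)
  show "h (- x) = - h x" "e (- x) = - e x" "f (- x) = - f x"
    by (metis m h_scale e_scale f_scale)+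
qed

lemma lin_L: "Vector_Spaces.linear s s L"
  unfolding Vector_Spaces.linear_iff L0_def using vs h_add h_scale
  by (auto simp: V.scale_right_distrib V.scale_scale mult.commute)

lemma L_add: "L (x + y) = L x + L y" and L_scale: "L (s c x) = s c (L x)"
  using linearD[OF lin_L] by auto

lemma h_L: "h v = s (-2) (L v)"
  by (simp add: L0_def V.scale_scale)

lemma e_L: "e (L v) = L (e v) + e v"
proof -
  have "e (h v) = h (e v) - s 2 (e v)" using comm_he[of v] by (simp add: algebra_simps)
  hence "e (L v) = s (-1/2) (h (e v) - s 2 (e v))" by (simp add: L0_def e_scale e_neg)
  also have "\<dots> = L (e v) + e v"
    by (simp add: L0_def V.scale_right_diff_distrib V.scale_scale)
  finally show ?thesis .
qed

lemma f_L: "f (L v) = L (f v) - f v"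
proof -
  have "f (h v) = h (f v) + s 2 (f v)" using comm_hf[of v] by (simp add: algebra_simps)
  hence "f (L v) = s (-1/2) (h (f v) + s 2 (f v))" by (simp add: L0_def f_scale f_neg)
  also have "\<dots> = L (f v) - f v"
    by (simp add: L0_def V.scale_right_distrib V.scale_scale)
  finally show ?thesis .
qed

lemma e_zero: "e 0 = 0" using e_scale[of 0 0] by simp
lemma f_zero: "f 0 = 0" using f_scale[of 0 0] by simp
lemma h_zero: "h 0 = 0" using h_scale[of 0 0] by simp

lemma L_zero [simp]: "L 0 = 0"
  using L_scale[of 0 0] by simp

lemma L_neg: "L (- x) = - L x"
  by (metis L_add L_zero add.right_inverse add_right_imp_eq add.commute)

lemma L_sum: "L (\<Sum>i\<in>A. g i) = (\<Sum>i\<in>A. L (g i))"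
  by (induction A rule: infinite_finite_induct) (auto simp: L_zero L_add)

lemma zact_upto:
  assumes "degree p < N"
  shows "Z p v = (\<Sum>i<N. s (coeff p i) ((L^^i) v))"
proof -
  have "Z p v = (\<Sum>i\<in>{..degree p}. s (coeff p i) ((L^^i) v))" by (simp add: zact_def)
  also have "\<dots> = (\<Sum>i<N. s (coeff p i) ((L^^i) v))"
    by (rule sum.mono_neutral_left) (use assms in \<open>auto simp: coeff_eq_0\<close>)
  finally show ?thesis .
qed

lemma zact_pCons: "Z (pCons a p) v = s a v + L (Z p v)"
proof -
  define N where "N = Suc (degree p)"
  have d1: "degree (pCons a p) < Suc N" unfolding N_def
    by (metis degree_pCons_le le_imp_less_Suc)
  have d2: "degree p < N" unfolding N_def by simp
  have "Z (pCons a p) v = (\<Sum>i<Suc N. s (coeff (pCons a p) i) ((L^^i) v))"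
    by (rule zact_upto[OF d1])
  also have "\<dots> = s a v + (\<Sum>i<N. s (coeff p i) ((L^^(Suc i)) v))"
    by (subst sum.lessThan_Suc_shift) simp
  also have "\<dots> = s a v + L (\<Sum>i<N. s (coeff p i) ((L^^i) v))"
    by (simp add: L_sum L_scale)
  also have "\<dots> = s a v + L (Z p v)" by (simp add: zact_upto[OF d2])
  finally show ?thesis .
qed

lemma zact_0 [simp]: "Z 0 v = 0"
  by (simp add: zact_def)

lemma zact_const [simp]: "Z [:c:] v = s c v"
  by (simp add: zact_pCons L_zero)

lemma zact_one [simp]: "Z 1 v = v"
  using zact_const[of 1 v] by (simp add: one_pCons L_zero)

lemma zact_padd: "Z (p + q) v = Z p v + Z q v"
proof -
  define N where "N = Suc (max (degree p) (degree q))"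
  have "degree (p + q) < N" "degree p < N" "degree q < N" unfolding N_def
    using degree_add_le_max[of p q] by auto
  thus ?thesis by (simp add: zact_upto V.scale_left_distrib sum.distrib)
qed

lemma zact_smult: "Z (smult c p) v = s c (Z p v)"
proof -
  define N where "N = Suc (degree p)"
  have "degree (smult c p) < N" "degree p < N" unfolding N_def
    using degree_smult_le[of c p] by auto
  thus ?thesis by (simp add: zact_upto V.scale_sum_right V.scale_scale)
qed

lemma zact_vadd: "Z p (v + w) = Z p v + Z p w"
proof (induction p)
  case (pCons a p)
  then show ?case by (simp add: zact_pCons V.scale_right_distrib L_add add_ac)
qed simp

lemma zact_vscale: "Z p (s c v) = s c (Z p v)"
proof (induction p)
  case (pCons a p)
  then show ?case by (simp add: zact_pCons V.scale_right_distrib L_scale V.scale_scale mult.commute)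
qed simp

lemma zact_vzero [simp]: "Z p 0 = 0"
  using zact_vscale[of p 0 0] by simp

lemma zact_vneg: "Z p (- v) = - Z p v"
proof -
  have m: "- x = s (-1) x" for x by (simp add: V.scale_minus_left)
  show ?thesis by (metis m zact_vscale)
qed

lemma zact_vdiff: "Z p (v - w) = Z p v - Z p w"
  using zact_vadd[of p v "- w"] by (simp add: zact_vneg)

lemma zact_vsum: "Z p (\<Sum>i\<in>A. g i) = (\<Sum>i\<in>A. Z p (g i))"
  by (induction A rule: infinite_finite_induct) (auto simp: zact_vadd)

lemma zact_L: "Z p (L v) = L (Z p v)"
proof (induction p)
  case (pCons a p)
  then show ?case by (simp add: zact_pCons L_add L_scale)
qed (simp add: L_zero)

lemma zact_mult: "Z (p * q) v = Z p (Z q v)"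
proof (induction p)
  case (pCons a p)
  then show ?case by (simp add: zact_pCons zact_padd zact_smult zact_L)
qed simp

lemma zact_comm: "Z p (Z q v) = Z q (Z p v)"
proof -
  have "Z p (Z q v) = Z (p * q) v" by (simp add: zact_mult)
  also have "\<dots> = Z (q * p) v" by (simp add: mult.commute)
  also have "\<dots> = Z q (Z p v)" by (simp add: zact_mult)
  finally show ?thesis .
qed

lemma zact_X: "Z [:0,1:] v = L v"
  by (simp add: zact_pCons)

lemma e_zact: "e (Z p v) = Z (pcompose p [:1,1:]) (e v)"
proof (induction p)
  case 0 show ?case by (simp add: e_zero)
next
  case (pCons a p)
  define P where "P = pcompose p [:1,1:]"
  have Z11: "Z [:1,1:] w = w + L w" for w by (simp add: zact_pCons)
  have "e (Z (pCons a p) v) = s a (e v) + (L (e (Z p v)) + e (Z p v))"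
    by (simp add: zact_pCons e_add e_scale e_L)
  also have "\<dots> = s a (e v) + Z [:1,1:] (Z P (e v))"
    by (simp add: pCons.IH P_def Z11 add.commute)
  also have "\<dots> = Z (pcompose (pCons a p) [:1,1:]) (e v)"
    by (simp only: pcompose_pCons zact_padd zact_mult zact_const P_def)
  finally show ?case .
qed

lemma f_zact: "f (Z p v) = Z (pcompose p [:-1,1:]) (f v)"
proof (induction p)
  case 0 show ?case by (simp add: f_zero)
next
  case (pCons a p)
  define P where "P = pcompose p [:-1,1:]"
  have Z11: "Z [:-1,1:] w = L w - w" for w by (simp add: zact_pCons V.scale_minus_left)
  have "f (Z (pCons a p) v) = s a (f v) + (L (f (Z p v)) - f (Z p v))"
    by (simp add: zact_pCons f_add f_scale f_L)
  also have "\<dots> = s a (f v) + Z [:-1,1:] (Z P (f v))"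
    by (simp add: pCons.IH P_def Z11)
  also have "\<dots> = Z (pcompose (pCons a p) [:-1,1:]) (f v)"
    by (simp only: pcompose_pCons zact_padd zact_mult zact_const P_def)
  finally show ?case .
qed

lemma h_zact: "h (Z p v) = Z p (h v)"
  by (simp add: h_L zact_vscale zact_L zact_vneg)

lemma zbij: "p \<noteq> 0 \<Longrightarrow> bij (Z p)"
  using rat unfolding rational_sl2_module_def by auto

lemma zinj: "p \<noteq> 0 \<Longrightarrow> Z p x = Z p y \<Longrightarrow> x = y"
  using zbij unfolding bij_def inj_def by blast

lemma zsurj: "p \<noteq> 0 \<Longrightarrow> \<exists>x. Z p x = y"
  using zbij unfolding bij_def surj_def by metis

lemma fin_gen: "\<exists>S. finite S \<and> (\<forall>v. \<exists>q c. q \<noteq> 0 \<and> Z q v = (\<Sum>x\<in>S. Z (c x) x))"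
  using rat unfolding rational_sl2_module_def by auto

end


type_synonym K = "complex poly fract"

definition shK :: "complex poly \<Rightarrow> K \<Rightarrow> K" where
  "shK t r = (SOME r'. \<exists>p q. q \<noteq> 0 \<and> r = Fract p q \<and> r' = Fract (pcompose p t) (pcompose q t))"

lemma shK_Fract:
  assumes t: "degree t > 0" and q: "q \<noteq> 0"
  shows "shK t (Fract p q) = Fract (pcompose p t) (pcompose q t)"
proof -
  let ?P = "\<lambda>r'. \<exists>p' q'. q' \<noteq> 0 \<and> Fract p q = Fract p' q' \<and> r' = Fract (pcompose p' t) (pcompose q' t)"
  have ex: "\<exists>r'. ?P r'" using q by blast
  have "?P (shK t (Fract p q))" unfolding shK_def by (rule someI_ex[OF ex])
  then obtain p' q' where pq: "q' \<noteq> 0" "Fract p q = Fract p' q'"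
    and sh: "shK t (Fract p q) = Fract (pcompose p' t) (pcompose q' t)"
    by blast
  have "p * q' = p' * q" using pq q eq_fract(1) by blast
  hence "pcompose (p * q') t = pcompose (p' * q) t" by simp
  hence "pcompose p t * pcompose q' t = pcompose p' t * pcompose q t"
    by (simp only: pcompose_mult)
  moreover have "pcompose q t \<noteq> 0" "pcompose q' t \<noteq> 0"
    using q pq(1) t pcompose_eq_0 by blast+
  ultimately show ?thesis using sh eq_fract(1) by metis
qed

lemma deg11: "degree [:1,1::complex:] > 0" and deg11m: "degree [:-1,1::complex:] > 0"
  by auto

lemma pc_nz: "degree t > 0 \<Longrightarrow> q \<noteq> 0 \<Longrightarrow> pcompose q (t::complex poly) \<noteq> 0"
  using pcompose_eq_0 by blast

lemma shK_add:
  assumes t: "degree t > 0"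
  shows "shK t (a + b) = shK t a + shK t b"
proof -
  obtain p q where a: "a = Fract p q" "q \<noteq> 0" by (cases a)
  obtain p' q' where b: "b = Fract p' q'" "q' \<noteq> 0" by (cases b)
  have qq: "q * q' \<noteq> 0" using a b by simp
  have "a + b = Fract (p * q' + p' * q) (q * q')" using a b by simp
  hence "shK t (a + b) = Fract (pcompose (p * q' + p' * q) t) (pcompose (q * q') t)"
    using shK_Fract[OF t qq] by simp
  also have "\<dots> = Fract (pcompose p t * pcompose q' t + pcompose p' t * pcompose q t) (pcompose q t * pcompose q' t)"
    by (simp only: pcompose_add pcompose_mult)
  also have "\<dots> = Fract (pcompose p t) (pcompose q t) + Fract (pcompose p' t) (pcompose q' t)"
    using pc_nz[OF t a(2)] pc_nz[OF t b(2)] by simp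
  also have "\<dots> = shK t a + shK t b" using a b shK_Fract[OF t] by simp
  finally show ?thesis .
qed

lemma shK_mult:
  assumes t: "degree t > 0"
  shows "shK t (a * b) = shK t a * shK t b"
proof -
  obtain p q where a: "a = Fract p q" "q \<noteq> 0" by (cases a)
  obtain p' q' where b: "b = Fract p' q'" "q' \<noteq> 0" by (cases b)
  have qq: "q * q' \<noteq> 0" using a b by simp
  have "a * b = Fract (p * p') (q * q')" using a b by simp
  hence "shK t (a * b) = Fract (pcompose (p * p') t) (pcompose (q * q') t)"
    using shK_Fract[OF t qq] by simp
  also have "\<dots> = Fract (pcompose p t * pcompose p' t) (pcompose q t * pcompose q' t)"
    by (simp only: pcompose_mult)
  also have "\<dots> = shK t a * shK t b" using a b shK_Fract[OF t] by simp
  finally show ?thesis .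
qed

lemma shK_one: "degree t > 0 \<Longrightarrow> shK t 1 = 1"
  by (simp add: One_fract_def shK_Fract pcompose_1)

lemma shK_zero: "degree t > 0 \<Longrightarrow> shK t 0 = 0"
  by (simp add: Zero_fract_def shK_Fract pcompose_1)

lemma shK_const: "degree t > 0 \<Longrightarrow> shK t (Fract [:c:] 1) = Fract [:c:] 1"
  by (simp add: shK_Fract pcompose_1)

lemma shK_inv1: "shK [:1,1:] (shK [:-1,1:] r) = r"
proof (cases r)
  case (Fract p q)
  have c: "pcompose (pcompose x [:-1,1:]) [:1,1:] = x" for x :: "complex poly"
    by (simp add: pcompose_assoc[symmetric] pcompose_pCons)
  have "pcompose q [:-1,1:] \<noteq> 0" using Fract by (simp add: pcompose_eq_0_iff)
  thus ?thesis using Fract by (simp add: shK_Fract c)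
qed

lemma shK_inv2: "shK [:-1,1:] (shK [:1,1:] r) = r"
proof (cases r)
  case (Fract p q)
  have c: "pcompose (pcompose x [:1,1:]) [:-1,1:] = x" for x :: "complex poly"
    by (simp add: pcompose_assoc[symmetric] pcompose_pCons)
  have "pcompose q [:1,1:] \<noteq> 0" using Fract by (simp add: pcompose_eq_0_iff)
  thus ?thesis using Fract by (simp add: shK_Fract c)
qed

lemma shK_eq0: "degree t > 0 \<Longrightarrow> shK t r = 0 \<longleftrightarrow> r = 0"
  by (cases r) (auto simp: shK_Fract Zero_fract_def eq_fract pcompose_eq_0_iff)

lemma shift_invariant_poly:
  fixes p q :: "complex poly"
  assumes q: "q \<noteq> 0" and eq: "pcompose p [:1,1:] * q = p * pcompose q [:1,1:]"
  shows "\<exists>c. p = smult c q"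
proof -
  have fin: "finite {x. poly q x = 0}" using q by (rule poly_roots_finite)
  define M :: real where "M = 1 + (\<Sum>x\<in>{x. poly q x = 0}. \<bar>Re x\<bar>)"
  have Mgt: "Re x < M" if "poly q x = 0" for x
  proof -
    have "\<bar>Re x\<bar> \<le> (\<Sum>x\<in>{x. poly q x = 0}. \<bar>Re x\<bar>)"
      by (rule member_le_sum) (use that fin in auto)
    thus ?thesis unfolding M_def by linarith
  qed
  have qne: "poly q (of_real M + of_nat n) \<noteq> 0" for n
  proof
    assume "poly q (of_real M + of_nat n) = 0"
    from Mgt[OF this] show False by simp
  qed
  define c where "c = poly p (of_real M) / poly q (of_real M)"
  define r where "r = p - smult c q"
  have req: "poly r (x + 1) * poly q x = poly r x * poly q (x + 1)" for x
  proof -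
    have "poly (pcompose p [:1,1:] * q) x = poly (p * pcompose q [:1,1:]) x" using eq by simp
    hence "poly p (x + 1) * poly q x = poly p x * poly q (x + 1)"
      by (simp add: poly_pcompose add.commute)
    thus ?thesis unfolding r_def by (simp add: algebra_simps)
  qed
  have r0: "poly r (of_real M + of_nat n) = 0" for n
  proof (induction n)
    case 0
    show ?case using qne[of 0] unfolding r_def c_def by simp
  next
    case (Suc n)
    have "poly r (of_real M + of_nat n + 1) * poly q (of_real M + of_nat n) = 0"
      using req[of "of_real M + of_nat n"] Suc by simp
    thus ?case using qne[of n] by (simp add: add_ac)
  qed
  have "r = 0"
  proof (rule ccontr)
    assume "r \<noteq> 0"
    hence "finite {x. poly r x = 0}" by (rule poly_roots_finite)
    moreover have "range (\<lambda>n::nat. of_real M + of_nat n :: complex) \<subseteq> {x. poly r x = 0}"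
      using r0 by auto
    moreover have "infinite (range (\<lambda>n::nat. of_real M + of_nat n :: complex))"
      by (rule range_inj_infinite) (auto simp: inj_def)
    ultimately show False using finite_subset by blast
  qed
  thus ?thesis unfolding r_def by auto
qed

lemma shK_fixed:
  assumes "shK [:1,1:] r = r"
  shows "\<exists>c. r = Fract [:c:] 1"
proof (cases r)
  case (Fract p q)
  have "pcompose q [:1,1:] \<noteq> 0" using Fract by (simp add: pcompose_eq_0_iff)
  hence "pcompose p [:1,1:] * q = p * pcompose q [:1,1:]"
    using assms Fract by (simp add: shK_Fract eq_fract)
  then obtain c where "p = smult c q" using shift_invariant_poly Fract by blast
  hence "r = Fract [:c:] 1" using Fract by (simp add: eq_fract)
  thus ?thesis by blast
qed



context ratmod
begin

definition sK :: "K \<Rightarrow> 'v \<Rightarrow> 'v" where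
  "sK r v = (SOME w. \<exists>p q. q \<noteq> 0 \<and> r = Fract p q \<and> Z q w = Z p v)"

lemma sK_char:
  assumes q: "q \<noteq> 0"
  shows "Z q (sK (Fract p q) v) = Z p v"
proof -
  let ?P = "\<lambda>w. \<exists>p' q'. q' \<noteq> 0 \<and> Fract p q = Fract p' q' \<and> Z q' w = Z p' v"
  obtain w0 where "Z q w0 = Z p v" using zsurj[OF q] by blast
  hence ex: "\<exists>w. ?P w" using q by blast
  have "?P (sK (Fract p q) v)" unfolding sK_def by (rule someI_ex[OF ex])
  then obtain p' q' where pq: "q' \<noteq> 0" "Fract p q = Fract p' q'"
      "Z q' (sK (Fract p q) v) = Z p' v" by blast
  have eq: "p * q' = p' * q" using pq q eq_fract(1) by blast
  have "Z q' (Z q (sK (Fract p q) v)) = Z q (Z q' (sK (Fract p q) v))" by (rule zact_comm)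
  also have "\<dots> = Z q (Z p' v)" using pq(3) by simp
  also have "\<dots> = Z (q * p') v" by (simp add: zact_mult)
  also have "q * p' = q' * p" using eq by (simp add: mult.commute)
  also have "Z (q' * p) v = Z q' (Z p v)" by (simp add: zact_mult)
  finally show ?thesis using zinj[OF pq(1)] by blast
qed

lemma sK_eqI: "q \<noteq> 0 \<Longrightarrow> Z q w = Z p v \<Longrightarrow> sK (Fract p q) v = w"
  using sK_char zinj by metis

lemma vsK: "vector_space sK"
proof
  fix a :: K and x y :: 'v
  obtain p q where a: "a = Fract p q" "q \<noteq> 0" by (cases a)
  show "sK a (x + y) = sK a x + sK a y"
    unfolding a(1) by (rule sK_eqI[OF a(2)]) (simp add: zact_vadd sK_char[OF a(2)])
  show "sK 1 x = x"
    unfolding One_fract_def by (rule sK_eqI) auto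
next
  fix a b :: K and x :: 'v
  obtain p q where a: "a = Fract p q" "q \<noteq> 0" by (cases a)
  obtain p' q' where b: "b = Fract p' q'" "q' \<noteq> 0" by (cases b)
  have qq: "q * q' \<noteq> 0" using a b by simp
  have "a + b = Fract (p * q' + p' * q) (q * q')" using a b by simp
  moreover have "Z (q * q') (sK a x + sK b x) = Z (p * q' + p' * q) x"
  proof -
    have "Z (q * q') (sK a x + sK b x) = Z q' (Z q (sK a x)) + Z q (Z q' (sK b x))"
      by (simp add: zact_vadd zact_mult zact_comm)
    also have "\<dots> = Z q' (Z p x) + Z q (Z p' x)" using a b sK_char by simp
    also have "\<dots> = Z (p * q' + p' * q) x"
      by (simp add: zact_padd zact_mult zact_comm)
    finally show ?thesis .
  qed
  ultimately show "sK (a + b) x = sK a x + sK b x" using sK_eqI[OF qq] by metis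
  have "a * b = Fract (p * p') (q * q')" using a b by simp
  moreover have "Z (q * q') (sK a (sK b x)) = Z (p * p') x"
  proof -
    have "Z (q * q') (sK a (sK b x)) = Z q' (Z q (sK a (sK b x)))"
      by (simp add: zact_mult zact_comm)
    also have "\<dots> = Z q' (Z p (sK b x))" using a sK_char by simp
    also have "\<dots> = Z p (Z q' (sK b x))" by (rule zact_comm)
    also have "\<dots> = Z p (Z p' x)" using b sK_char by simp
    finally show ?thesis by (simp add: zact_mult)
  qed
  ultimately show "sK a (sK b x) = sK (a * b) x" using sK_eqI[OF qq] by metis
qed

sublocale K: vector_space sK by (rule vsK)

lemma sK_poly: "sK (Fract p 1) v = Z p v"
  by (rule sK_eqI) auto

lemma sK_const: "sK (Fract [:c:] 1) v = s c v"
  by (simp add: sK_poly)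

lemma s_sK: "s c v = sK (Fract [:c:] 1) v"
  by (simp add: sK_poly)

lemma L_sK: "L v = sK (Fract [:0,1:] 1) v"
  by (simp add: sK_poly zact_X)

lemma h_sK: "h v = sK (Fract [:0,-2:] 1) v"
proof -
  have "[:0,-2:] = smult (-2) [:0,1::complex:]" by simp
  hence "sK (Fract [:0,-2:] 1) v = s (-2) (L v)" by (simp only: sK_poly zact_smult zact_X)
  thus ?thesis by (simp add: h_L)
qed

lemma e_sK: "e (sK r v) = sK (shK [:1,1:] r) (e v)"
proof -
  obtain p q where r: "r = Fract p q" "q \<noteq> 0" by (cases r)
  have nz: "pcompose q [:1,1:] \<noteq> 0" using pc_nz[OF deg11 r(2)] .
  have "sK (Fract (pcompose p [:1,1:]) (pcompose q [:1,1:])) (e v) = e (sK r v)"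
  proof (rule sK_eqI[OF nz])
    show "Z (pcompose q [:1,1:]) (e (sK r v)) = Z (pcompose p [:1,1:]) (e v)"
      using r sK_char[OF r(2)] by (simp add: e_zact[symmetric])
  qed
  thus ?thesis using r shK_Fract[OF deg11 r(2)] by simp
qed

lemma f_sK: "f (sK r v) = sK (shK [:-1,1:] r) (f v)"
proof -
  obtain p q where r: "r = Fract p q" "q \<noteq> 0" by (cases r)
  have nz: "pcompose q [:-1,1:] \<noteq> 0" using pc_nz[OF deg11m r(2)] .
  have "sK (Fract (pcompose p [:-1,1:]) (pcompose q [:-1,1:])) (f v) = f (sK r v)"
  proof (rule sK_eqI[OF nz])
    show "Z (pcompose q [:-1,1:]) (f (sK r v)) = Z (pcompose p [:-1,1:]) (f v)"
      using r sK_char[OF r(2)] by (simp add: f_zact[symmetric])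
  qed
  thus ?thesis using r shK_Fract[OF deg11m r(2)] by simp
qed

lemma h_sK_comm: "h (sK r v) = sK r (h v)"
  by (simp add: h_sK K.scale_scale mult.commute)

lemma finite_span: "\<exists>S. finite S \<and> K.span S = UNIV"
proof -
  obtain S where S: "finite S" "\<And>v. \<exists>q c. q \<noteq> 0 \<and> Z q v = (\<Sum>x\<in>S. Z (c x) x)"
    using fin_gen by blast
  have "v \<in> K.span S" for v
  proof -
    obtain q c where qc: "q \<noteq> 0" "Z q v = (\<Sum>x\<in>S. Z (c x) x)" using S(2) by blast
    have "v = sK (Fract 1 q) (Z q v)" by (rule sK_eqI[OF qc(1), symmetric]) simp
    also have "\<dots> = (\<Sum>x\<in>S. sK (Fract 1 q) (sK (Fract (c x) 1) x))"
      by (simp add: qc(2) K.scale_sum_right sK_poly)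
    also have "\<dots> \<in> K.span S"
      by (intro K.span_sum K.span_scale K.span_base)
    finally show ?thesis .
  qed
  thus ?thesis using S(1) by blast
qed

definition KB :: "'v set" where
  "KB = (SOME B. finite B \<and> K.independent B \<and> K.span B = UNIV)"

lemma KB: "finite KB" "K.independent KB" "K.span KB = UNIV"
proof -
  obtain S where S: "finite S" "K.span S = UNIV" using finite_span by blast
  obtain B where B: "B \<subseteq> S" "K.independent B" "S \<subseteq> K.span B"
    using K.maximal_independent_subset[of S] by blast
  have "finite B \<and> K.independent B \<and> K.span B = UNIV"
    using B S finite_subset[OF B(1) S(1)]
    by (metis K.span_mono K.span_span subset_antisym top_greatest)
  hence "\<exists>B. finite B \<and> K.independent B \<and> K.span B = UNIV" by blast
  from someI_ex[OF this] show "finite KB" "K.independent KB" "K.span KB = UNIV"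
    unfolding KB_def by auto
qed

sublocale KF: finite_dimensional_vector_space sK KB
  by unfold_locales (use KB in auto)

lemma V_subspace_Z:
  assumes "V.subspace U" "h ` U \<subseteq> U" "v \<in> U"
  shows "Z p v \<in> U"
proof (induction p)
  case 0 show ?case using assms V.subspace_0 by simp
next
  case (pCons a p)
  have "h (Z p v) \<in> U" using pCons assms by blast
  hence "s (-1/2) (h (Z p v)) \<in> U" by (rule V.subspace_scale[OF assms(1)])
  hence "L (Z p v) \<in> U" by (simp only: L0_def)
  thus ?case using pCons assms by (simp add: zact_pCons V.subspace_add V.subspace_scale)
qed

lemma rsub_iff:
  "rational_submodule s e f h U \<longleftrightarrow> K.subspace U \<and> e ` U \<subseteq> U \<and> f ` U \<subseteq> U"
proof
  assume R: "rational_submodule s e f h U"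
  hence sub: "V.subspace U" and hU: "h ` U \<subseteq> U" and sat: "\<And>q v. q \<noteq> 0 \<Longrightarrow> Z q v \<in> U \<Longrightarrow> v \<in> U"
    unfolding rational_submodule_def by auto
  have "K.subspace U"
    unfolding K.subspace_def
  proof (intro conjI ballI allI)
    show "0 \<in> U" using sub V.subspace_0 by blast
    show "x + y \<in> U" if "x \<in> U" "y \<in> U" for x y using sub that V.subspace_add by blast
    show "sK c x \<in> U" if "x \<in> U" for c x
    proof -
      obtain p q where r: "c = Fract p q" "q \<noteq> 0" by (cases c)
      have "Z q (sK c x) \<in> U" using r sK_char V_subspace_Z[OF sub hU that] by simp
      thus ?thesis using sat r(2) by blast
    qed
  qed
  thus "K.subspace U \<and> e ` U \<subseteq> U \<and> f ` U \<subseteq> U" using R unfolding rational_submodule_def by auto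
next
  assume A: "K.subspace U \<and> e ` U \<subseteq> U \<and> f ` U \<subseteq> U"
  have "V.subspace U" unfolding V.subspace_def
    using A K.subspace_0 K.subspace_add K.subspace_scale by (auto simp: s_sK)
  moreover have "h ` U \<subseteq> U" using A K.subspace_scale by (auto simp: h_sK)
  moreover have "v \<in> U" if "q \<noteq> 0" "Z q v \<in> U" for q v
  proof -
    have "v = sK (Fract 1 q) (Z q v)" by (rule sK_eqI[OF that(1), symmetric]) simp
    thus ?thesis using A that K.subspace_scale by metis
  qed
  ultimately show "rational_submodule s e f h U" using A unfolding rational_submodule_def by auto
qed

end


definition cKc :: "complex \<Rightarrow> K" where
  "cKc m = Fract [: m * (m - 1), - 2 * m :] 1"

lemma cKc_step: "shK [:-1,1:] (cKc m) + Fract [:0,-2:] 1 = cKc (m + 1)"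
proof -
  have "pcompose [: m * (m - 1), - 2 * m :] [:-1,1:] = [: m * (m - 1) + 2 * m, - 2 * m :]"
    by (simp add: pcompose_pCons algebra_simps)
  hence "shK [:-1,1:] (cKc m) = Fract [: m * (m - 1) + 2 * m, - 2 * m :] 1"
    unfolding cKc_def by (simp add: shK_Fract pcompose_1)
  moreover have "[: m * (m - 1) + 2 * m, - 2 * m :] + [:0,-2:] = [: (m + 1) * (m + 1 - 1), - 2 * (m + 1) :]"
    by (simp add: algebra_simps)
  ultimately show ?thesis unfolding cKc_def by simp
qed

lemma cKc_nz: "m \<noteq> 0 \<Longrightarrow> cKc m \<noteq> 0"
  unfolding cKc_def by (simp add: Zero_fract_def eq_fract)

context ratmod
begin

abbreviation "rsub U \<equiv> rational_submodule s e f h U"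

lemma rsubD: assumes "rsub U"
  shows "K.subspace U" "\<And>x. x \<in> U \<Longrightarrow> e x \<in> U" "\<And>x. x \<in> U \<Longrightarrow> f x \<in> U"
  using assms rsub_iff by auto

lemma e_comm_f: "e (f v) = f (e v) + h v"
  using comm_ef[of v] by (simp add: algebra_simps)

lemma e_inj_mod:
  assumes A: "rsub A'" and ex: "e x \<in> A'"
  shows "x \<in> A'"
proof (rule ccontr)
  assume xA: "x \<notin> A'"
  note sub = rsubD(1)[OF A] and eA = rsubD(2)[OF A] and fA = rsubD(3)[OF A]
  define y where "y j = (f ^^ j) x" for j
  have y0: "y 0 = x" and ySuc: "y (Suc j) = f (y j)" for j by (simp_all add: y_def)
  have rec: "e (y (Suc j)) - sK (cKc (of_nat (Suc j))) (y j) \<in> A'" for j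
  proof (induction j)
    case 0
    have "cKc (of_nat (Suc 0)) = Fract [:0,-2:] 1" by (simp add: cKc_def)
    hence "e (y (Suc 0)) - sK (cKc (of_nat (Suc 0))) (y 0) = f (e x)"
      by (simp add: y0 ySuc e_comm_f h_sK)
    thus ?case using fA[OF ex] by simp
  next
    case (Suc j)
    define c where "c = cKc (of_nat (Suc j))"
    define a where "a = e (y (Suc j)) - sK c (y j)"
    have a: "a \<in> A'" using Suc unfolding a_def c_def .
    have "e (y (Suc (Suc j))) = f (e (y (Suc j))) + h (y (Suc j))"
      by (simp add: ySuc e_comm_f)
    also have "f (e (y (Suc j))) = f a + sK (shK [:-1,1:] c) (y (Suc j))"
    proof -
      have "e (y (Suc j)) = a + sK c (y j)" by (simp add: a_def)
      hence "f (e (y (Suc j))) = f a + f (sK c (y j))" by (simp add: f_add)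
      thus ?thesis by (simp add: f_sK ySuc)
    qed
    also have "h (y (Suc j)) = sK (Fract [:0,-2:] 1) (y (Suc j))" by (rule h_sK)
    finally have "e (y (Suc (Suc j))) = f a + sK (shK [:-1,1:] c + Fract [:0,-2:] 1) (y (Suc j))"
      by (simp add: K.scale_left_distrib add.assoc)
    also have "shK [:-1,1:] c + Fract [:0,-2:] 1 = cKc (of_nat (Suc (Suc j)))"
      unfolding c_def using cKc_step[of "of_nat (Suc j)"] by simp
    finally show ?case using fA[OF a] by simp
  qed
  define M where "M d = K.span (A' \<union> y ` {..<d})" for d
  have M0: "M 0 = A'" unfolding M_def using sub by simp
  have ex_d: "\<exists>d. y d \<in> M d"
  proof (rule ccontr)
    assume no: "\<not> (\<exists>d. y d \<in> M d)"
    have "d \<le> K.dim (A' \<union> y ` {..<d})" for d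
    proof (induction d)
      case (Suc d)
      have "K.span (A' \<union> y ` {..<d}) \<subset> K.span (A' \<union> y ` {..<Suc d})"
      proof
        show "K.span (A' \<union> y ` {..<d}) \<subseteq> K.span (A' \<union> y ` {..<Suc d})"
          by (rule K.span_mono) auto
        have "y d \<in> K.span (A' \<union> y ` {..<Suc d})" by (rule K.span_base) auto
        moreover have "y d \<notin> K.span (A' \<union> y ` {..<d})" using no unfolding M_def by blast
        ultimately show "K.span (A' \<union> y ` {..<d}) \<noteq> K.span (A' \<union> y ` {..<Suc d})" by blast
      qed
      hence "K.dim (A' \<union> y ` {..<d}) < K.dim (A' \<union> y ` {..<Suc d})" by (rule KF.dim_psubset)
      thus ?case using Suc by simp
    qed simp
    from this[of "Suc (card KB)"] KF.dim_subset_UNIV[of "A' \<union> y ` {..<Suc (card KB)}"]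
    show False unfolding KF.dimension_def by simp
  qed
  define d0 where "d0 = (LEAST d. y d \<in> M d)"
  have yd0: "y d0 \<in> M d0" unfolding d0_def using ex_d by (rule LeastI_ex)
  have notless: "y d \<notin> M d" if "d < d0" for d using not_less_Least[of d] that unfolding d0_def by blast
  have "d0 \<noteq> 0"
  proof
    assume "d0 = 0" thus False using yd0 M0 y0 xA by simp
  qed
  then obtain d' where d0: "d0 = Suc d'" by (cases d0) auto
  define N where "N = {v. e v \<in> M d'}"
  have subM: "K.subspace (M d')" unfolding M_def by simp
  have "K.subspace N" unfolding K.subspace_def N_def
    using subM K.subspace_0[OF subM] K.subspace_add[OF subM] K.subspace_scale[OF subM]
    by (auto simp: e_zero e_add e_sK)
  moreover have "A' \<union> y ` {..<Suc d'} \<subseteq> N"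
  proof
    fix v assume "v \<in> A' \<union> y ` {..<Suc d'}"
    then consider "v \<in> A'" | j where "j < Suc d'" "v = y j" by blast
    thus "v \<in> N"
    proof cases
      case 1 thus ?thesis unfolding N_def M_def using eA by (auto intro: K.span_base)
    next
      case 2
      show ?thesis
      proof (cases j)
        case 0 thus ?thesis using 2 ex y0 unfolding N_def M_def by (auto intro: K.span_base)
      next
        case (Suc j')
        have a: "e (y (Suc j')) - sK (cKc (of_nat (Suc j'))) (y j') \<in> M d'"
          using rec[of j'] unfolding M_def by (auto intro: K.span_base)
        have "y j' \<in> M d'" using 2 Suc unfolding M_def by (auto intro: K.span_base)
        hence b: "sK (cKc (of_nat (Suc j'))) (y j') \<in> M d'" using K.subspace_scale[OF subM] by blast
        have "e (y (Suc j')) \<in> M d'" using K.subspace_add[OF subM a b] by simp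
        thus ?thesis using 2 Suc unfolding N_def by simp
      qed
    qed
  qed
  ultimately have "M (Suc d') \<subseteq> N" unfolding M_def by (rule K.span_minimal[rotated])
  hence e1: "e (y (Suc d')) \<in> M d'" using yd0 d0 unfolding N_def by auto
  define c where "c = cKc (of_nat (Suc d'))"
  have "of_nat (Suc d') \<noteq> (0::complex)" by (simp only: of_nat_eq_0_iff)
  hence cnz: "c \<noteq> 0" unfolding c_def by (rule cKc_nz)
  have e2: "e (y (Suc d')) - sK c (y d') \<in> M d'"
    using rec[of d'] unfolding M_def c_def by (auto intro: K.span_base)
  have "sK c (y d') \<in> M d'" using K.subspace_diff[OF subM e1 e2] by simp
  hence "sK (inverse c) (sK c (y d')) \<in> M d'" using K.subspace_scale[OF subM] by blast
  hence "y d' \<in> M d'" using cnz by simp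
  thus False using notless[of d'] d0 by simp
qed

lemma chain_bound:
  assumes U0: "U 0 = {0}" and st: "\<forall>i<n. U i \<subset> U (Suc i)" and rs: "\<forall>i\<le>n. rsub (U i)"
  shows "n \<le> card KB"
proof -
  have "i \<le> K.dim (U i)" if "i \<le> n" for i
    using that
  proof (induction i)
    case (Suc i)
    have sub: "K.subspace (U i)" "K.subspace (U (Suc i))" using rs Suc rsubD by auto
    have "U i \<subset> U (Suc i)" using st Suc by simp
    hence "K.span (U i) \<subset> K.span (U (Suc i))" using sub K.span_eq_iff by metis
    hence "K.dim (U i) < K.dim (U (Suc i))" by (rule KF.dim_psubset)
    thus ?case using Suc by simp
  qed simp
  from this[of n] KF.dim_subset_UNIV[of "U n"] show ?thesis unfolding KF.dimension_def by simp
qed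

lemma rsub_0: "rsub {0}" by (simp add: rsub_iff e_zero f_zero)
lemma rsub_UNIV: "rsub UNIV" by (simp add: rsub_iff)

definition chainP :: "nat \<Rightarrow> bool" where
  "chainP n = (\<exists>U :: nat \<Rightarrow> 'v set. U 0 = {0} \<and> U n = UNIV \<and>
        (\<forall>i<n. U i \<subset> U (Suc i)) \<and> (\<forall>i\<le>n. rsub (U i)))"

lemma length_def': "rational_length s e f h = Greatest chainP"
  unfolding rational_length_def chainP_def ..

lemma chainP_ex: "\<exists>k. chainP k"
proof (cases "(UNIV :: 'v set) = {0}")
  case True
  hence "chainP 0" unfolding chainP_def using rsub_0 by (intro exI[of _ "\<lambda>_. {0}"]) auto
  thus ?thesis by blast
next
  case False
  hence "chainP 1" unfolding chainP_def using rsub_0 rsub_UNIV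
    by (intro exI[of _ "\<lambda>i. if i = 0 then {0} else UNIV"]) auto
  thus ?thesis by blast
qed

lemma chainP_bound: "chainP n \<Longrightarrow> n \<le> card KB"
  unfolding chainP_def using chain_bound by blast

lemma length_chain: "chainP (rational_length s e f h)"
  unfolding length_def' using chainP_ex chainP_bound by (metis GreatestI_nat)

lemma length_max: "chainP n \<Longrightarrow> n \<le> rational_length s e f h"
  unfolding length_def' using chainP_bound by (metis Greatest_le_nat)

lemma max_chain_simple:
  assumes U0: "U 0 = {0}" and Ul: "U l = UNIV" and st: "\<forall>i<l. U i \<subset> U (Suc i)"
    and rs: "\<forall>i\<le>l. rsub (U i)" and l: "l = rational_length s e f h"
    and i: "i < l" and Y: "rsub Y" "U i \<subseteq> Y" "Y \<subseteq> U (Suc i)"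
  shows "Y = U i \<or> Y = U (Suc i)"
proof (rule ccontr)
  assume "\<not> (Y = U i \<or> Y = U (Suc i))"
  hence Y1: "U i \<subset> Y" and Y2: "Y \<subset> U (Suc i)" using Y by auto
  define U' where "U' j = (if j \<le> i then U j else if j = Suc i then Y else U (j - 1))" for j
  have "chainP (Suc l)" unfolding chainP_def
  proof (intro exI[of _ U'] conjI allI impI)
    show "U' 0 = {0}" using U0 by (simp add: U'_def)
    show "U' (Suc l) = UNIV" using Ul i by (simp add: U'_def)
    fix j
    show "U' j \<subset> U' (Suc j)" if "j < Suc l"
    proof -
      consider "Suc j \<le> i" | "j = i" | "j = Suc i" | "j > Suc i" by linarith
      thus ?thesis
      proof cases
        case 1 thus ?thesis using st i by (simp add: U'_def)
      next
        case 2 thus ?thesis using Y1 by (simp add: U'_def)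
      next
        case 3 thus ?thesis using Y2 by (simp add: U'_def)
      next
        case 4
        then obtain k where k: "j = Suc k" "k > i" by (cases j) auto
        have "k < l" using that k by simp
        thus ?thesis using st k 4 by (simp add: U'_def)
      qed
    qed
    show "rsub (U' j)" if "j \<le> Suc l"
      using rs Y(1) that i by (auto simp: U'_def)
  qed
  hence "Suc l \<le> rational_length s e f h" by (rule length_max)
  thus False using l by simp
qed

end


locale clinop = vector_space s for s :: "complex \<Rightarrow> 'b::ab_group_add \<Rightarrow> 'b" +
  fixes T :: "'b \<Rightarrow> 'b"
  assumes lin: "Vector_Spaces.linear s s T"
begin

lemma T_add: "T (x + y) = T x + T y" and T_scale: "T (s c x) = s c (T x)"
  using linearD[OF lin] by auto

lemma T_zero [simp]: "T 0 = 0" using T_scale[of 0 0] by simp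

lemma T_sum: "T (\<Sum>i\<in>I. g i) = (\<Sum>i\<in>I. T (g i))"
  by (induction I rule: infinite_finite_induct) (auto simp: T_add)

definition gact :: "complex poly \<Rightarrow> 'b \<Rightarrow> 'b" where
  "gact p v = (\<Sum>i\<le>degree p. s (coeff p i) ((T^^i) v))"

lemma gact_upto:
  assumes "degree p < N"
  shows "gact p v = (\<Sum>i<N. s (coeff p i) ((T^^i) v))"
proof -
  have "gact p v = (\<Sum>i\<in>{..degree p}. s (coeff p i) ((T^^i) v))" by (simp add: gact_def)
  also have "\<dots> = (\<Sum>i<N. s (coeff p i) ((T^^i) v))"
    by (rule sum.mono_neutral_left) (use assms in \<open>auto simp: coeff_eq_0\<close>)
  finally show ?thesis .
qed

lemma gact_pCons: "gact (pCons a p) v = s a v + T (gact p v)"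
proof -
  define N where "N = Suc (degree p)"
  have d1: "degree (pCons a p) < Suc N" unfolding N_def
    by (metis degree_pCons_le le_imp_less_Suc)
  have d2: "degree p < N" unfolding N_def by simp
  have "gact (pCons a p) v = (\<Sum>i<Suc N. s (coeff (pCons a p) i) ((T^^i) v))"
    by (rule gact_upto[OF d1])
  also have "\<dots> = s a v + (\<Sum>i<N. s (coeff p i) ((T^^(Suc i)) v))"
    by (subst sum.lessThan_Suc_shift) simp
  also have "\<dots> = s a v + T (\<Sum>i<N. s (coeff p i) ((T^^i) v))"
    by (simp add: T_sum T_scale)
  also have "\<dots> = s a v + T (gact p v)" by (simp add: gact_upto[OF d2])
  finally show ?thesis .
qed

lemma gact_0 [simp]: "gact 0 v = 0"
  by (simp add: gact_def)

lemma gact_const [simp]: "gact [:c:] v = s c v"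
  by (simp add: gact_pCons)

lemma gact_padd: "gact (p + q) v = gact p v + gact q v"
proof -
  define N where "N = Suc (max (degree p) (degree q))"
  have "degree (p + q) < N" "degree p < N" "degree q < N" unfolding N_def
    using degree_add_le_max[of p q] by auto
  thus ?thesis by (simp add: gact_upto scale_left_distrib sum.distrib)
qed

lemma gact_smult: "gact (smult c p) v = s c (gact p v)"
proof -
  define N where "N = Suc (degree p)"
  have "degree (smult c p) < N" "degree p < N" unfolding N_def
    using degree_smult_le[of c p] by auto
  thus ?thesis by (simp add: gact_upto scale_sum_right scale_scale)
qed

lemma gact_T: "gact p (T v) = T (gact p v)"
proof (induction p)
  case (pCons a p)
  then show ?case by (simp add: gact_pCons T_add T_scale)
qed simp

lemma gact_mult: "gact (p * q) v = gact p (gact q v)"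
proof (induction p)
  case (pCons a p)
  then show ?case by (simp add: gact_pCons gact_padd gact_smult gact_T)
qed simp

lemma gact_in:
  assumes "subspace A" "T ` A \<subseteq> A" "v \<in> A"
  shows "gact p v \<in> A"
proof (induction p)
  case 0 show ?case using assms subspace_0 by simp
next
  case (pCons a p)
  have "T (gact p v) \<in> A" using pCons assms by blast
  thus ?case using assms by (simp add: gact_pCons subspace_add subspace_scale)
qed

lemma eigen:
  assumes sA: "subspace A" and sA': "subspace A'" and TA: "T ` A \<subseteq> A"
    and P: "P \<noteq> 0" and rel: "\<forall>a\<in>A. gact P a \<in> A'"
    and a0: "a0 \<in> A" "a0 \<notin> A'"
  shows "\<exists>lam a. a \<in> A \<and> a \<notin> A' \<and> T a - s lam a \<in> A'"
  using P rel
proof (induction "degree P" arbitrary: P rule: less_induct)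
  case less
  show ?case
  proof (cases "degree P = 0")
    case True
    then obtain c where Pc: "P = [:c:]" by (metis degree_eq_zeroE)
    hence c: "c \<noteq> 0" using less by simp
    have "s c a0 \<in> A'" using less(3) a0 Pc by simp
    hence "s (inverse c) (s c a0) \<in> A'" using sA' subspace_scale by blast
    hence "a0 \<in> A'" using c by (simp add: scale_scale)
    thus ?thesis using a0 by blast
  next
    case False
    have "\<not> (\<exists>a l. a \<noteq> 0 \<and> l = 0 \<and> P = pCons a l)" using False by auto
    then obtain lam where "poly P lam = 0" using fundamental_theorem_of_algebra_alt by blast
    then obtain Q where PQ: "P = [:-lam,1:] * Q" using poly_eq_0_iff_dvd by (metis dvdE)
    have Q: "Q \<noteq> 0" using PQ less(2) by auto
    have "[:-lam,1:] \<noteq> (0::complex poly)" by simp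
    hence "degree P = degree [:-lam,1:] + degree Q" using PQ Q degree_mult_eq by blast
    hence dQ: "degree Q < degree P" by simp
    show ?thesis
    proof (cases "\<exists>a. a \<in> A \<and> a \<notin> A' \<and> T a - s lam a \<in> A'")
      case True thus ?thesis by blast
    next
      case False
      have "\<forall>a\<in>A. gact Q a \<in> A'"
      proof
        fix a assume a: "a \<in> A"
        have gQ: "gact Q a \<in> A" by (rule gact_in[OF sA TA a])
        have g1: "gact [:-lam,1:] w = T w - s lam w" for w
          by (simp add: gact_pCons scale_minus_left)
        have "gact P a = gact [:-lam,1:] (gact Q a)" by (simp only: PQ gact_mult)
        hence "gact P a = T (gact Q a) - s lam (gact Q a)" by (simp only: g1)
        moreover have "gact P a \<in> A'" using less(3) a by blast
        ultimately have "T (gact Q a) - s lam (gact Q a) \<in> A'" by simp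
        thus "gact Q a \<in> A'" using False gQ by blast
      qed
      thus ?thesis using less(1)[OF dQ Q] by blast
    qed
  qed
qed

end

context vector_space
begin

lemma dep_exists:
  assumes G: "finite G" "card G \<le> N" and u: "\<forall>k\<le>N. u k \<in> span G"
  shows "\<exists>g. (\<exists>k\<le>N. g k \<noteq> 0) \<and> (\<Sum>k\<le>N. scale (g k) (u k)) = 0"
proof (cases "inj_on u {..N}")
  case True
  define U where "U = u ` {..N}"
  have cU: "card U = Suc N" unfolding U_def using True by (simp add: card_image)
  have "\<not> independent U"
  proof
    assume "independent U"
    moreover have "U \<subseteq> span G" using u unfolding U_def by auto
    ultimately have "card U \<le> card G" using independent_span_bound[OF G(1)] by blast
    thus False using cU G by simp
  qed
  moreover have fU: "finite U" unfolding U_def by simp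
  ultimately obtain w where w: "\<exists>v\<in>U. w v \<noteq> 0" "(\<Sum>v\<in>U. scale (w v) v) = 0"
    using dependent_finite by blast
  have "(\<Sum>k\<le>N. scale (w (u k)) (u k)) = (\<Sum>v\<in>U. scale (w v) v)"
    unfolding U_def by (rule sum.reindex[OF True, symmetric, unfolded comp_def])
  moreover have "\<exists>k\<le>N. w (u k) \<noteq> 0" using w(1) unfolding U_def by auto
  ultimately show ?thesis using w(2) by (intro exI[of _ "\<lambda>k. w (u k)"]) auto
next
  case False
  then obtain i j where ij: "i \<le> N" "j \<le> N" "i \<noteq> j" "u i = u j"
    unfolding inj_on_def by auto
  define g :: "nat \<Rightarrow> 'a" where "g k = (if k = i then 1 else if k = j then -1 else 0)" for k
  have "scale (g k) (u k) = (if k = i then u i else 0) - (if k = j then u j else 0)" for k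
    unfolding g_def using ij by (auto simp: scale_minus_left)
  hence "(\<Sum>k\<le>N. scale (g k) (u k)) = (\<Sum>k\<le>N. (if k = i then u i else 0)) - (\<Sum>k\<le>N. (if k = j then u j else 0))"
    by (simp add: sum_subtractf)
  also have "\<dots> = 0" using ij by simp
  finally show ?thesis using ij by (intro exI[of _ g]) (auto simp: g_def)
qed

end

lemma fun_sum_apply: "(\<Sum>i\<in>I. F i) y = (\<Sum>i\<in>I. F i y)"
  by (induction I rule: infinite_finite_induct) auto



context ratmod
begin

definition sF :: "K \<Rightarrow> ('v \<Rightarrow> 'v) \<Rightarrow> ('v \<Rightarrow> 'v)" where
  "sF r g = (\<lambda>y. sK r (g y))"

lemma vsF: "vector_space sF"
  by unfold_locales
     (simp_all add: sF_def fun_eq_iff K.scale_right_distrib K.scale_left_distrib)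

sublocale FS: vector_space sF by (rule vsF)

lemma e_sum: "e (\<Sum>i\<in>I. g i) = (\<Sum>i\<in>I. e (g i))"
  by (induction I rule: infinite_finite_induct) (auto simp: e_add e_zero)

lemma e_diff: "e (x - y) = e x - e y"
  using e_add[of "x - y" y] by simp

end

locale relsetup = ratmod s e f h
  for s :: "complex \<Rightarrow> 'v::ab_group_add \<Rightarrow> 'v" and e f h +
  fixes A A' :: "'v set" and T :: "'v \<Rightarrow> 'v"
  assumes rA: "rsub A" and rA': "rsub A'" and AA': "A' \<subseteq> A"
    and Tlin: "Vector_Spaces.linear sK sK T"
    and TA: "T ` A \<subseteq> A" and TA': "T ` A' \<subseteq> A'"
    and Te: "\<And>a. a \<in> A \<Longrightarrow> T (e a) - e (T a) \<in> A'"
begin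

lemma sA: "K.subspace A" and sA': "K.subspace A'" using rA rA' rsubD by auto
lemma eA: "a \<in> A \<Longrightarrow> e a \<in> A" using rA rsubD by auto

lemma Tk_lin: "Vector_Spaces.linear sK sK (T^^k)"
proof (induction k)
  case 0 show ?case using K.linear_id by (simp add: id_def)
next
  case (Suc k)
  show ?case unfolding funpow.simps(2) using Vector_Spaces.linear_compose[OF Suc Tlin] .
qed

lemma Tk_add: "(T^^k) (x + y) = (T^^k) x + (T^^k) y" and Tk_scale: "(T^^k) (sK r x) = sK r ((T^^k) x)"
  using linearD[OF Tk_lin] by auto

lemma Tk_diff: "(T^^k) (x - y) = (T^^k) x - (T^^k) y"
  using Tk_add[of k "x - y" y] by simp

lemma TkA: "a \<in> A \<Longrightarrow> (T^^k) a \<in> A"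
  by (induction k) (use TA in auto)

lemma TkA': "a \<in> A' \<Longrightarrow> (T^^k) a \<in> A'"
  by (induction k) (use TA' in auto)

lemma T_add: "T (x + y) = T x + T y" and T_sK: "T (sK r x) = sK r (T x)"
  using linearD[OF Tlin] by auto

lemma T_diff: "T (x - y) = T x - T y"
  using T_add[of "x - y" y] by simp

lemma Tke: "a \<in> A \<Longrightarrow> (T^^k) (e a) - e ((T^^k) a) \<in> A'"
proof (induction k)
  case 0 thus ?case using K.subspace_0[OF sA'] by simp
next
  case (Suc k)
  have eq: "(T^^Suc k) (e a) - e ((T^^Suc k) a)
      = T ((T^^k) (e a) - e ((T^^k) a)) + (T (e ((T^^k) a)) - e (T ((T^^k) a)))"
    by (simp add: T_diff)
  have x: "T ((T^^k) (e a) - e ((T^^k) a)) \<in> A'" using Suc TA' by blast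
  have y: "T (e ((T^^k) a)) - e (T ((T^^k) a)) \<in> A'" using Te TkA Suc by blast
  show ?case unfolding eq using K.subspace_add[OF sA' x y] .
qed

definition R :: "nat \<Rightarrow> (nat \<Rightarrow> K) \<Rightarrow> 'v \<Rightarrow> 'v" where
  "R N g a = (\<Sum>k\<le>N. sK (g k) ((T^^k) a))"

definition D :: "nat \<Rightarrow> (nat \<Rightarrow> K) \<Rightarrow> bool" where
  "D N g \<longleftrightarrow> (\<forall>a\<in>A. R N g a \<in> A')"

lemma R_add: "R N g (x + y) = R N g x + R N g y"
  by (simp add: R_def Tk_add K.scale_right_distrib sum.distrib)

lemma R_sK: "R N g (sK r x) = sK r (R N g x)"
  by (simp add: R_def Tk_scale K.scale_scale K.scale_sum_right mult.commute)

lemma R_zero: "R N g 0 = 0"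
  using R_sK[of N g 0 0] by simp

lemma D_scale: "D N g \<Longrightarrow> D N (\<lambda>k. g k * c)"
proof -
  assume "D N g"
  have "R N (\<lambda>k. g k * c) a = sK c (R N g a)" for a
    by (simp add: R_def K.scale_sum_right K.scale_scale mult.commute)
  thus "D N (\<lambda>k. g k * c)" using \<open>D N g\<close> K.subspace_scale[OF sA'] unfolding D_def by simp
qed

lemma D_diff: "D N g \<Longrightarrow> D N g' \<Longrightarrow> D N (\<lambda>k. g k - g' k)"
proof -
  assume "D N g" "D N g'"
  have "R N (\<lambda>k. g k - g' k) a = R N g a - R N g' a" for a
    by (simp add: R_def K.scale_left_diff_distrib sum_subtractf)
  thus "D N (\<lambda>k. g k - g' k)" using \<open>D N g\<close> \<open>D N g'\<close> K.subspace_diff[OF sA'] unfolding D_def by simp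
qed

lemma D_tau: "D N g \<Longrightarrow> D N (\<lambda>k. shK [:-1,1:] (g k))"
proof -
  assume Dg: "D N g"
  show ?thesis unfolding D_def
  proof
    fix b assume b: "b \<in> A"
    define X where "X = R N (\<lambda>k. shK [:-1,1:] (g k)) b"
    have e1: "e X = (\<Sum>k\<le>N. sK (g k) (e ((T^^k) b)))"
      unfolding X_def R_def by (simp only: e_sum e_sK shK_inv1)
    have e2: "R N g (e b) - e X = (\<Sum>k\<le>N. sK (g k) ((T^^k) (e b) - e ((T^^k) b)))"
      unfolding e1 R_def by (simp only: K.scale_right_diff_distrib sum_subtractf)
    have m1: "R N g (e b) - e X \<in> A'"
      unfolding e2 using Tke[OF b] by (intro K.subspace_sum[OF sA'] K.subspace_scale[OF sA'])
    have m2: "R N g (e b) \<in> A'" using Dg eA[OF b] unfolding D_def by blast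
    have "e X = R N g (e b) - (R N g (e b) - e X)" by simp
    hence "e X \<in> A'" using K.subspace_diff[OF sA' m2 m1] by simp
    thus "X \<in> A'" using e_inj_mod[OF rA'] by blast
  qed
qed

lemma exists_rel: "\<exists>N g. (\<exists>k\<le>N. g k \<noteq> 0) \<and> D N g"
proof -
  obtain B where B: "finite B" "B \<subseteq> A" "K.independent B" "K.span B = A"
    using KF.basis_subspace_exists[OF sA] by metis
  define \<iota> :: "'v \<Rightarrow> 'v \<Rightarrow> 'v \<Rightarrow> 'v" where "\<iota> b w = (\<lambda>y. if y = b then w else (0::'v))" for b w
  define G where "G = (\<lambda>(b,w). \<iota> b w) ` (B \<times> KB)"
  define N where "N = card B * card KB"
  have fG: "finite G" unfolding G_def using B(1) KB(1) by simp
  have cG: "card G \<le> N" unfolding G_def N_def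
    using card_image_le[of "B \<times> KB" "\<lambda>(b,w). \<iota> b w"] B(1) KB(1) by (simp add: card_cartesian_product)
  have iota_span: "\<iota> b w \<in> FS.span G" if b: "b \<in> B" for b w
  proof -
    let ?S = "{w. \<iota> b w \<in> FS.span G}"
    have "K.subspace ?S" unfolding K.subspace_def
    proof (intro conjI ballI allI)
      have "\<iota> b 0 = 0" by (simp add: \<iota>_def fun_eq_iff)
      thus "0 \<in> ?S" using FS.span_zero by simp
      show "x + y \<in> ?S" if "x \<in> ?S" "y \<in> ?S" for x y
      proof -
        have "\<iota> b (x + y) = \<iota> b x + \<iota> b y" by (simp add: \<iota>_def fun_eq_iff)
        thus ?thesis using that FS.span_add by simp
      qed
      show "sK c x \<in> ?S" if "x \<in> ?S" for c x
      proof -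
        have "\<iota> b (sK c x) = sF c (\<iota> b x)" by (simp add: \<iota>_def sF_def fun_eq_iff)
        thus ?thesis using that FS.span_scale by simp
      qed
    qed
    moreover have "KB \<subseteq> ?S" using b by (auto simp: G_def intro!: FS.span_base)
    ultimately have "K.span KB \<subseteq> ?S" by (rule K.span_minimal[rotated])
    thus ?thesis using KB(3) by auto
  qed
  define u where "u k = (\<lambda>y. if y \<in> B then (T^^k) y else 0)" for k
  have u_eq: "u k = (\<Sum>b\<in>B. \<iota> b ((T^^k) b))" for k
  proof
    fix y
    have "(\<Sum>b\<in>B. \<iota> b ((T^^k) b)) y = (\<Sum>b\<in>B. if y = b then (T^^k) b else 0)"
      by (simp add: fun_sum_apply \<iota>_def)
    also have "\<dots> = u k y" using B(1) by (simp add: u_def)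
    finally show "u k y = (\<Sum>b\<in>B. \<iota> b ((T^^k) b)) y" by simp
  qed
  have "\<forall>k\<le>N. u k \<in> FS.span G" using iota_span by (auto simp: u_eq intro!: FS.span_sum)
  then obtain g where g: "\<exists>k\<le>N. g k \<noteq> 0" "(\<Sum>k\<le>N. sF (g k) (u k)) = 0"
    using FS.dep_exists[OF fG cG] by blast
  have Rb: "R N g b = 0" if "b \<in> B" for b
  proof -
    have "(\<Sum>k\<le>N. sF (g k) (u k)) b = 0" using g(2) by simp
    thus ?thesis using that by (simp add: fun_sum_apply sF_def u_def R_def)
  qed
  have "K.subspace {a. R N g a = 0}" unfolding K.subspace_def using R_add R_sK R_zero by auto
  hence "K.span B \<subseteq> {a. R N g a = 0}" using Rb by (intro K.span_minimal) auto
  hence "D N g" unfolding D_def using B(4) K.subspace_0[OF sA'] by auto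
  thus ?thesis using g(1) by blast
qed

lemma rel_const: "\<exists>N c. (\<exists>k\<le>N. c k \<noteq> 0) \<and> (\<forall>a\<in>A. (\<Sum>k\<le>N. s (c k) ((T^^k) a)) \<in> A')"
proof -
  obtain N g0 where g0: "\<exists>k\<le>N. g0 k \<noteq> 0" "D N g0" using exists_rel by blast
  define supp where "supp g = {k. k \<le> N \<and> g k \<noteq> 0}" for g :: "nat \<Rightarrow> K"
  have fin: "finite (supp g)" for g unfolding supp_def by simp
  define Pm where "Pm m \<longleftrightarrow> (\<exists>g. D N g \<and> supp g \<noteq> {} \<and> card (supp g) = m)" for m
  have "Pm (card (supp g0))" unfolding Pm_def using g0 by (auto simp: supp_def)
  define m where "m = (LEAST m. Pm m)"
  have "Pm m" unfolding m_def by (rule LeastI) fact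
  then obtain g1 where g1: "D N g1" "supp g1 \<noteq> {}" "card (supp g1) = m" unfolding Pm_def by blast
  have minimal: "m \<le> card (supp g)" if "D N g" "supp g \<noteq> {}" for g
    unfolding m_def by (rule Least_le) (use that in \<open>auto simp: Pm_def\<close>)
  obtain k0 where k0: "k0 \<in> supp g1" using g1(2) by blast
  have k0': "k0 \<le> N" "g1 k0 \<noteq> 0" using k0 by (auto simp: supp_def)
  define g' where "g' k = g1 k * inverse (g1 k0)" for k
  have Dg': "D N g'" unfolding g'_def by (rule D_scale[OF g1(1)])
  have g'k0: "g' k0 = 1" using k0' by (simp add: g'_def)
  have supp': "supp g' = supp g1" using k0' by (auto simp: supp_def g'_def)
  define g2 where "g2 k = g' k - shK [:-1,1:] (g' k)" for k
  have Dg2: "D N g2" unfolding g2_def by (rule D_diff[OF Dg' D_tau[OF Dg']])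
  have sub2: "supp g2 \<subseteq> supp g1 - {k0}"
  proof
    fix k assume k: "k \<in> supp g2"
    hence kN: "k \<le> N" and nz: "g' k - shK [:-1,1:] (g' k) \<noteq> 0" by (auto simp: supp_def g2_def)
    have "g' k \<noteq> 0" using nz shK_zero[OF deg11m] by auto
    moreover have "k \<noteq> k0" using nz g'k0 shK_one[OF deg11m] by auto
    ultimately show "k \<in> supp g1 - {k0}" using kN supp' by (auto simp: supp_def)
  qed
  have "card (supp g1 - {k0}) < card (supp g1)"
    by (rule card_Diff1_less[OF fin k0])
  hence "card (supp g2) < m" using card_mono[OF _ sub2] fin g1(3) by (meson finite_Diff le_less_trans)
  hence "supp g2 = {}" using minimal[OF Dg2] by (meson leD)
  hence fix1: "shK [:-1,1:] (g' k) = g' k" if "k \<le> N" for k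
    using that by (auto simp: supp_def g2_def)
  have "\<exists>c. g' k = Fract [:c:] 1" if "k \<le> N" for k
  proof -
    have "shK [:1,1:] (g' k) = g' k" using shK_inv1[of "g' k"] fix1[OF that] by simp
    thus ?thesis by (rule shK_fixed)
  qed
  then obtain c where c: "\<And>k. k \<le> N \<Longrightarrow> g' k = Fract [:c k:] 1" by metis
  have ck0: "c k0 \<noteq> 0"
  proof
    assume "c k0 = 0"
    hence "g' k0 = 0" using c[OF k0'(1)] by (simp add: Zero_fract_def)
    thus False using g'k0 by simp
  qed
  have "\<forall>a\<in>A. (\<Sum>k\<le>N. s (c k) ((T^^k) a)) \<in> A'"
  proof
    fix a assume a: "a \<in> A"
    have "R N g' a = (\<Sum>k\<le>N. s (c k) ((T^^k) a))"
      unfolding R_def by (rule sum.cong) (simp_all add: c sK_const)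
    moreover have "R N g' a \<in> A'" using Dg' a unfolding D_def by blast
    ultimately show "(\<Sum>k\<le>N. s (c k) ((T^^k) a)) \<in> A'" by simp
  qed
  thus ?thesis using ck0 k0'(1) by blast
qed

lemma eigenvector:
  assumes a0: "a0 \<in> A" "a0 \<notin> A'"
  shows "\<exists>lam a. a \<in> A \<and> a \<notin> A' \<and> T a - s lam a \<in> A'"
proof -
  have "Vector_Spaces.linear s s T"
    unfolding Vector_Spaces.linear_iff using vs T_add T_sK by (simp add: s_sK)
  then interpret CL: clinop s T by (intro clinop.intro vs clinop_axioms.intro)
  obtain N c where Nc: "\<exists>k\<le>N. c k \<noteq> 0" "\<forall>a\<in>A. (\<Sum>k\<le>N. s (c k) ((T^^k) a)) \<in> A'"
    using rel_const by blast
  define P where "P = (\<Sum>k\<le>N. monom (c k) k)"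
  have cP: "coeff P k = (if k \<le> N then c k else 0)" for k
    unfolding P_def by (simp add: coeff_sum coeff_monom)
  have dP: "degree P < Suc N" using cP by (metis degree_le le_imp_less_Suc not_le)
  have "P \<noteq> 0" using Nc(1) cP by (metis coeff_0)
  moreover have "\<forall>a\<in>A. CL.gact P a \<in> A'"
  proof
    fix a assume "a \<in> A"
    have "CL.gact P a = (\<Sum>k<Suc N. s (coeff P k) ((T^^k) a))" by (rule CL.gact_upto[OF dP])
    also have "\<dots> = (\<Sum>k\<le>N. s (c k) ((T^^k) a))"
      by (simp add: lessThan_Suc_atMost cP)
    finally show "CL.gact P a \<in> A'" using Nc(2) \<open>a \<in> A\<close> by simp
  qed
  moreover have "V.subspace A" "V.subspace A'" using rA rA' unfolding rational_submodule_def by auto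
  ultimately show ?thesis using CL.eigen[of A A' P a0] TA a0 by blast
qed

end


locale ratpair = M1: ratmod s1 e1 f1 h1 + M2: ratmod s2 e2 f2 h2
  for s1 :: "complex \<Rightarrow> 'v::ab_group_add \<Rightarrow> 'v" and e1 f1 h1
  and s2 :: "complex \<Rightarrow> 'w::ab_group_add \<Rightarrow> 'w" and e2 f2 h2
begin

abbreviation "Hom \<equiv> sl2_hom s1 e1 f1 h1 s2 e2 f2 h2"

lemma homD:
  assumes "\<phi> \<in> Hom"
  shows "\<phi> (x + y) = \<phi> x + \<phi> y" "\<phi> (s1 c x) = s2 c (\<phi> x)"
    "\<phi> (e1 x) = e2 (\<phi> x)" "\<phi> (f1 x) = f2 (\<phi> x)" "\<phi> (h1 x) = h2 (\<phi> x)"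
  using assms linearD[of s1 s2 \<phi>] unfolding sl2_hom_def by (auto simp: fun_eq_iff)

lemma hom_L: "\<phi> \<in> Hom \<Longrightarrow> \<phi> (L0 s1 h1 x) = L0 s2 h2 (\<phi> x)"
  by (simp only: L0_def homD(2) homD(5))

lemma hom_Z: "\<phi> \<in> Hom \<Longrightarrow> \<phi> (zact s1 h1 p x) = zact s2 h2 p (\<phi> x)"
proof (induction p)
  case 0
  have "\<phi> 0 = 0" using homD(2)[OF 0, of 0 0] by simp
  thus ?case by simp
next
  case (pCons a p)
  thus ?case by (simp add: M1.zact_pCons M2.zact_pCons homD hom_L)
qed

lemma hom_sK: "\<phi> \<in> Hom \<Longrightarrow> \<phi> (M1.sK r x) = M2.sK r (\<phi> x)"
proof -
  assume H: "\<phi> \<in> Hom"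
  obtain p q where r: "r = Fract p q" "q \<noteq> 0" by (cases r)
  have "zact s2 h2 q (\<phi> (M1.sK r x)) = zact s2 h2 p (\<phi> x)"
    using r M1.sK_char[OF r(2)] hom_Z[OF H] by metis
  thus ?thesis using M2.sK_eqI[OF r(2)] r(1) by metis
qed

lemma kernel_rsub:
  assumes A: "M1.rsub A" and B': "M2.rsub B'"
    and add: "\<And>x y. \<theta> (x + y) = \<theta> x + \<theta> y" and sc: "\<And>r x. \<theta> (M1.sK r x) = M2.sK r (\<theta> x)"
    and te: "\<And>x. \<theta> (e1 x) = e2 (\<theta> x)" and tf: "\<And>x. \<theta> (f1 x) = f2 (\<theta> x)"
  shows "M1.rsub {x \<in> A. \<theta> x \<in> B'}"
proof -
  have t0: "\<theta> 0 = 0" using sc[of 0 0] by simp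
  note sA = M1.rsubD[OF A] and sB = M2.rsubD[OF B']
  have "M1.K.subspace {x \<in> A. \<theta> x \<in> B'}" unfolding M1.K.subspace_def
    using sA(1) sB(1) M1.K.subspace_0 M2.K.subspace_0 M1.K.subspace_add M2.K.subspace_add
      M1.K.subspace_scale M2.K.subspace_scale by (auto simp: t0 add sc)
  thus ?thesis unfolding M1.rsub_iff using sA sB by (auto simp: te tf)
qed

lemma image_rsub:
  assumes A: "M1.rsub A" and B': "M2.rsub B'" and H: "\<phi> \<in> Hom"
  shows "M2.rsub {b. \<exists>a\<in>A. b - \<phi> a \<in> B'}"
proof -
  have t0: "\<phi> 0 = 0" using homD(2)[OF H, of 0 0] by simp
  note sA = M1.rsubD[OF A] and sB = M2.rsubD[OF B']
  have "M2.K.subspace {b. \<exists>a\<in>A. b - \<phi> a \<in> B'}" unfolding M2.K.subspace_def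
  proof (intro conjI ballI allI)
    have "0 \<in> A" "0 - \<phi> 0 \<in> B'" using M1.K.subspace_0[OF sA(1)] M2.K.subspace_0[OF sB(1)] t0 by auto
    thus "0 \<in> {b. \<exists>a\<in>A. b - \<phi> a \<in> B'}" by blast
    show "x + y \<in> {b. \<exists>a\<in>A. b - \<phi> a \<in> B'}" if xy: "x \<in> {b. \<exists>a\<in>A. b - \<phi> a \<in> B'}" "y \<in> {b. \<exists>a\<in>A. b - \<phi> a \<in> B'}" for x y
    proof -
      obtain a a' where aa: "a \<in> A" "x - \<phi> a \<in> B'" "a' \<in> A" "y - \<phi> a' \<in> B'" using xy by blast
      have eq: "x + y - \<phi> (a + a') = (x - \<phi> a) + (y - \<phi> a')" by (simp add: homD[OF H])
      have "a + a' \<in> A" using M1.K.subspace_add[OF sA(1) aa(1) aa(3)] .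
      moreover have "x + y - \<phi> (a + a') \<in> B'" unfolding eq using M2.K.subspace_add[OF sB(1) aa(2) aa(4)] .
      ultimately show ?thesis by blast
    qed
    show "M2.sK c x \<in> {b. \<exists>a\<in>A. b - \<phi> a \<in> B'}" if xin: "x \<in> {b. \<exists>a\<in>A. b - \<phi> a \<in> B'}" for c x
    proof -
      obtain a where aa: "a \<in> A" "x - \<phi> a \<in> B'" using xin by blast
      have eq: "M2.sK c x - \<phi> (M1.sK c a) = M2.sK c (x - \<phi> a)"
        by (simp add: hom_sK[OF H] M2.K.scale_right_diff_distrib)
      have "M1.sK c a \<in> A" using M1.K.subspace_scale[OF sA(1) aa(1)] .
      moreover have "M2.sK c x - \<phi> (M1.sK c a) \<in> B'" unfolding eq using M2.K.subspace_scale[OF sB(1) aa(2)] .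
      ultimately show ?thesis by blast
    qed
  qed
  moreover have "e2 b \<in> {b. \<exists>a\<in>A. b - \<phi> a \<in> B'}" if bin: "b \<in> {b. \<exists>a\<in>A. b - \<phi> a \<in> B'}" for b
  proof -
    obtain a where aa: "a \<in> A" "b - \<phi> a \<in> B'" using bin by blast
    have eq: "e2 b - \<phi> (e1 a) = e2 (b - \<phi> a)" by (simp add: homD[OF H] M2.e_diff)
    have "e1 a \<in> A" using sA(2)[OF aa(1)] .
    moreover have "e2 b - \<phi> (e1 a) \<in> B'" unfolding eq using sB(2)[OF aa(2)] .
    ultimately show ?thesis by blast
  qed
  moreover have "f2 b \<in> {b. \<exists>a\<in>A. b - \<phi> a \<in> B'}" if bin: "b \<in> {b. \<exists>a\<in>A. b - \<phi> a \<in> B'}" for b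
  proof -
    obtain a where aa: "a \<in> A" "b - \<phi> a \<in> B'" using bin by blast
    have eq: "f2 b - \<phi> (f1 a) = f2 (b - \<phi> a)"
      using M2.f_add[of "b - \<phi> a" "\<phi> a"] by (simp add: homD[OF H])
    have "f1 a \<in> A" using sA(3)[OF aa(1)] .
    moreover have "f2 b - \<phi> (f1 a) \<in> B'" unfolding eq using sB(3)[OF aa(2)] .
    ultimately show ?thesis by blast
  qed
  ultimately show ?thesis unfolding M2.rsub_iff by blast
qed

lemma hom_diff:
  assumes H: "\<phi> \<in> Hom" shows "\<phi> (x - y) = \<phi> x - \<phi> y"
proof -
  have "\<phi> (x - y + y) = \<phi> (x - y) + \<phi> y" by (rule homD(1)[OF H])
  thus ?thesis by (simp add: eq_diff_eq)
qed

lemma s2_sK: "M2.sK r (s2 c y) = s2 c (M2.sK r y)"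
  by (simp add: M2.s_sK M2.K.scale_scale mult.commute)

lemma local_schur:
  assumes A: "M1.rsub A" and A': "M1.rsub A'" and AA: "A' \<subseteq> A" "A' \<noteq> A"
    and simA: "\<And>Y. M1.rsub Y \<Longrightarrow> A' \<subseteq> Y \<Longrightarrow> Y \<subseteq> A \<Longrightarrow> Y = A' \<or> Y = A"
    and B: "M2.rsub B" and B': "M2.rsub B'" and BB: "B' \<subseteq> B"
    and simB: "\<And>Y. M2.rsub Y \<Longrightarrow> B' \<subseteq> Y \<Longrightarrow> Y \<subseteq> B \<Longrightarrow> Y = B' \<or> Y = B"
    and \<phi>: "\<phi> \<in> Hom" and \<psi>: "\<psi> \<in> Hom"
    and \<phi>A: "\<phi> ` A \<subseteq> B" "\<phi> ` A' \<subseteq> B'" and \<psi>A: "\<psi> ` A \<subseteq> B" "\<psi> ` A' \<subseteq> B'"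
  shows "\<exists>c d. (c \<noteq> 0 \<or> d \<noteq> 0) \<and> (\<forall>a\<in>A. s2 c (\<phi> a) + s2 d (\<psi> a) \<in> B')"
proof (cases "\<phi> ` A \<subseteq> B'")
  case True
  have "\<forall>a\<in>A. s2 1 (\<phi> a) + s2 0 (\<psi> a) \<in> B'"
  proof
    fix a assume "a \<in> A"
    hence "\<phi> a \<in> B'" using True by blast
    thus "s2 1 (\<phi> a) + s2 0 (\<psi> a) \<in> B'" by simp
  qed
  moreover have "(1::complex) \<noteq> 0 \<or> (0::complex) \<noteq> 0" by simp
  ultimately show ?thesis by blast
next
  case False
  then obtain a1 where a1: "a1 \<in> A" "\<phi> a1 \<notin> B'" by blast
  note sA = M1.rsubD[OF A] and sA' = M1.rsubD[OF A'] and sB = M2.rsubD[OF B] and sB' = M2.rsubD[OF B']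
  have kerrs: "M1.rsub {x \<in> A. \<phi> x \<in> B'}"
    by (rule kernel_rsub[OF A B']) (simp_all add: homD[OF \<phi>] hom_sK[OF \<phi>])
  have "{x \<in> A. \<phi> x \<in> B'} = A'"
  proof -
    have "A' \<subseteq> {x \<in> A. \<phi> x \<in> B'}" using AA \<phi>A by auto
    moreover have "{x \<in> A. \<phi> x \<in> B'} \<noteq> A" using a1 by blast
    ultimately show ?thesis using simA[OF kerrs] by blast
  qed
  hence injm: "\<And>x. x \<in> A \<Longrightarrow> \<phi> x \<in> B' \<Longrightarrow> x \<in> A'" by blast
  have \<phi>0: "\<phi> 0 = 0" using homD(2)[OF \<phi>, of 0 0] by simp
  have \<psi>0: "\<psi> 0 = 0" using homD(2)[OF \<psi>, of 0 0] by simp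
  have imrs: "M2.rsub {b. \<exists>a\<in>A. b - \<phi> a \<in> B'}" by (rule image_rsub[OF A B' \<phi>])
  have "{b. \<exists>a\<in>A. b - \<phi> a \<in> B'} = B"
  proof -
    have "B' \<subseteq> {b. \<exists>a\<in>A. b - \<phi> a \<in> B'}"
    proof
      fix b assume "b \<in> B'"
      moreover have "0 \<in> A" using M1.K.subspace_0[OF sA(1)] .
      ultimately show "b \<in> {b. \<exists>a\<in>A. b - \<phi> a \<in> B'}" using \<phi>0 by force
    qed
    moreover have "{b. \<exists>a\<in>A. b - \<phi> a \<in> B'} \<subseteq> B"
    proof
      fix b assume "b \<in> {b. \<exists>a\<in>A. b - \<phi> a \<in> B'}"
      then obtain a where a: "a \<in> A" "b - \<phi> a \<in> B'" by blast
      have "b - \<phi> a \<in> B" "\<phi> a \<in> B" using a BB \<phi>A by auto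
      hence "(b - \<phi> a) + \<phi> a \<in> B" by (rule M2.K.subspace_add[OF sB(1)])
      thus "b \<in> B" by simp
    qed
    moreover have "\<phi> a1 \<in> {b. \<exists>a\<in>A. b - \<phi> a \<in> B'}"
      using a1 M2.K.subspace_0[OF sB'(1)] by force
    ultimately show ?thesis using simB[OF imrs] a1 by blast
  qed
  hence surjm: "\<And>b. b \<in> B \<Longrightarrow> \<exists>a\<in>A. b - \<phi> a \<in> B'" by blast
  obtain \<beta> where \<beta>: "finite \<beta>" "\<beta> \<subseteq> A" "M1.K.independent \<beta>" "M1.K.span \<beta> = A"
    using M1.KF.basis_subspace_exists[OF sA(1)] by metis
  define pre where "pre b = (SOME a. a \<in> A \<and> \<psi> b - \<phi> a \<in> B')" for b
  have pre: "pre b \<in> A \<and> \<psi> b - \<phi> (pre b) \<in> B'" if "b \<in> A" for b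
  proof -
    have "\<exists>a. a \<in> A \<and> \<psi> b - \<phi> a \<in> B'" using surjm \<psi>A that by blast
    thus ?thesis unfolding pre_def by (rule someI_ex)
  qed
  interpret KK: vector_space_pair M1.sK M1.sK by (intro vector_space_pair.intro M1.vsK)
  define T where "T = KK.construct \<beta> pre"
  have Tlin: "Vector_Spaces.linear M1.sK M1.sK T" unfolding T_def by (rule KK.linear_construct[OF \<beta>(3)])
  have T_add: "T (x + y) = T x + T y" and T_sK: "T (M1.sK r x) = M1.sK r (T x)" for x y r
    using linearD[OF Tlin] by auto
  have T0: "T 0 = 0" using T_sK[of 0 0] by simp
  have Tb: "T b = pre b" if "b \<in> \<beta>" for b unfolding T_def by (rule KK.construct_basis[OF \<beta>(3) that])
  have TA: "T ` A \<subseteq> A"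
  proof
    fix y assume "y \<in> T ` A"
    then obtain x where "y = T x" by blast
    moreover have "T x \<in> M1.K.span (pre ` \<beta>)" unfolding T_def by (rule KK.construct_in_span[OF \<beta>(3)])
    moreover have "M1.K.span (pre ` \<beta>) \<subseteq> A"
      using pre \<beta>(2) sA(1) by (intro M1.K.span_minimal) auto
    ultimately show "y \<in> A" by blast
  qed
  have key: "\<psi> a - \<phi> (T a) \<in> B'" if "a \<in> A" for a
  proof -
    let ?S = "{a. \<psi> a - \<phi> (T a) \<in> B'}"
    have "M1.K.subspace ?S" unfolding M1.K.subspace_def
    proof (intro conjI ballI allI)
      show "0 \<in> ?S" using M2.K.subspace_0[OF sB'(1)] by (simp add: T0 \<phi>0 \<psi>0)
      show "x + y \<in> ?S" if "x \<in> ?S" "y \<in> ?S" for x y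
      proof -
        have "\<psi> (x + y) - \<phi> (T (x + y)) = (\<psi> x - \<phi> (T x)) + (\<psi> y - \<phi> (T y))"
          by (simp add: T_add homD[OF \<phi>] homD[OF \<psi>])
        thus ?thesis using that M2.K.subspace_add[OF sB'(1)] by simp
      qed
      show "M1.sK c x \<in> ?S" if "x \<in> ?S" for c x
      proof -
        have "\<psi> (M1.sK c x) - \<phi> (T (M1.sK c x)) = M2.sK c (\<psi> x - \<phi> (T x))"
          by (simp add: T_sK hom_sK[OF \<phi>] hom_sK[OF \<psi>] M2.K.scale_right_diff_distrib)
        thus ?thesis using that M2.K.subspace_scale[OF sB'(1)] by simp
      qed
    qed
    moreover have "\<beta> \<subseteq> ?S" using pre \<beta>(2) Tb by auto
    ultimately have "M1.K.span \<beta> \<subseteq> ?S" by (rule M1.K.span_minimal[rotated])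
    thus ?thesis using that \<beta>(4) by auto
  qed
  have TA': "T ` A' \<subseteq> A'"
  proof
    fix y assume "y \<in> T ` A'"
    then obtain x where x: "x \<in> A'" "y = T x" by blast
    have xA: "x \<in> A" using x AA by auto
    have "\<psi> x \<in> B'" using \<psi>A x by auto
    hence "\<psi> x - (\<psi> x - \<phi> (T x)) \<in> B'" by (rule M2.K.subspace_diff[OF sB'(1) _ key[OF xA]])
    hence "\<phi> (T x) \<in> B'" by simp
    moreover have "T x \<in> A" using TA xA by auto
    ultimately show "y \<in> A'" using injm x by blast
  qed
  have Te: "T (e1 a) - e1 (T a) \<in> A'" if a: "a \<in> A" for a
  proof -
    have ea: "e1 a \<in> A" using sA(2)[OF a] .
    have "T (e1 a) \<in> A" "e1 (T a) \<in> A" using TA ea sA(2) a by auto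
    hence XA: "T (e1 a) - e1 (T a) \<in> A" using M1.K.subspace_diff[OF sA(1)] by blast
    have "\<phi> (T (e1 a) - e1 (T a)) = e2 (\<psi> a - \<phi> (T a)) - (\<psi> (e1 a) - \<phi> (T (e1 a)))"
      by (simp add: hom_diff[OF \<phi>] homD[OF \<phi>] homD[OF \<psi>] M2.e_diff)
    moreover have "e2 (\<psi> a - \<phi> (T a)) \<in> B'" using sB'(2) key[OF a] by blast
    moreover have "\<psi> (e1 a) - \<phi> (T (e1 a)) \<in> B'" using key[OF ea] .
    ultimately have "\<phi> (T (e1 a) - e1 (T a)) \<in> B'" using M2.K.subspace_diff[OF sB'(1)] by simp
    thus ?thesis using injm XA by blast
  qed
  interpret RS: relsetup s1 e1 f1 h1 A A' T
    by (intro relsetup.intro ratmod.intro relsetup_axioms.intro M1.rat A A' AA(1) Tlin TA TA' Te)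
  obtain a0 where a0: "a0 \<in> A" "a0 \<notin> A'" using AA by blast
  obtain lam a where a: "a \<in> A" "a \<notin> A'" "T a - s1 lam a \<in> A'"
    using RS.eigenvector[OF a0] by blast
  define \<theta> where "\<theta> x = \<psi> x - s2 lam (\<phi> x)" for x
  have th_add: "\<theta> (x + y) = \<theta> x + \<theta> y" for x y
    by (simp add: \<theta>_def homD[OF \<phi>] homD[OF \<psi>] M2.V.scale_right_distrib)
  have th_sK: "\<theta> (M1.sK r x) = M2.sK r (\<theta> x)" for r x
    by (simp add: \<theta>_def hom_sK[OF \<phi>] hom_sK[OF \<psi>] s2_sK M2.K.scale_right_diff_distrib)
  have th_e: "\<theta> (e1 x) = e2 (\<theta> x)" for x
    by (simp add: \<theta>_def homD[OF \<phi>] homD[OF \<psi>] M2.e_diff M2.e_scale)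
  have th_f: "\<theta> (f1 x) = f2 (\<theta> x)" for x
  proof -
    have "f2 (\<psi> x - s2 lam (\<phi> x)) = f2 (\<psi> x) - s2 lam (f2 (\<phi> x))"
      using M2.f_add[of "\<psi> x - s2 lam (\<phi> x)" "s2 lam (\<phi> x)"] by (simp add: M2.f_scale)
    thus ?thesis by (simp add: \<theta>_def homD[OF \<phi>] homD[OF \<psi>])
  qed
  have kth: "M1.rsub {x \<in> A. \<theta> x \<in> B'}"
    by (rule kernel_rsub[OF A B' th_add th_sK th_e th_f])
  have "A' \<subseteq> {x \<in> A. \<theta> x \<in> B'}"
  proof
    fix x assume x: "x \<in> A'"
    have px: "\<psi> x \<in> B'" using x \<psi>A by blast
    have fx: "\<phi> x \<in> B'" using x \<phi>A by blast
    have "M2.sK (Fract [:lam:] 1) (\<phi> x) \<in> B'" by (rule M2.K.subspace_scale[OF sB'(1) fx])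
    hence "s2 lam (\<phi> x) \<in> B'" by (simp only: M2.s_sK)
    hence "\<psi> x - s2 lam (\<phi> x) \<in> B'" by (rule M2.K.subspace_diff[OF sB'(1) px])
    hence "\<theta> x \<in> B'" by (simp only: \<theta>_def)
    moreover have "x \<in> A" using x AA by blast
    ultimately show "x \<in> {x \<in> A. \<theta> x \<in> B'}" by blast
  qed
  moreover have "a \<in> {x \<in> A. \<theta> x \<in> B'}"
  proof -
    have "\<phi> (T a - s1 lam a) \<in> B'" using a(3) \<phi>A by blast
    moreover have "\<phi> (T a - s1 lam a) = \<phi> (T a) - s2 lam (\<phi> a)"
      by (simp add: hom_diff[OF \<phi>] homD[OF \<phi>])
    ultimately have m: "\<phi> (T a) - s2 lam (\<phi> a) \<in> B'" by simp
    have "(\<psi> a - \<phi> (T a)) + (\<phi> (T a) - s2 lam (\<phi> a)) \<in> B'"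
      by (rule M2.K.subspace_add[OF sB'(1) key[OF a(1)] m])
    hence "\<psi> a - s2 lam (\<phi> a) \<in> B'" by simp
    hence "\<theta> a \<in> B'" by (simp only: \<theta>_def)
    thus ?thesis using a(1) by blast
  qed
  ultimately have sub1: "A' \<subseteq> {x \<in> A. \<theta> x \<in> B'}" and ain: "a \<in> {x \<in> A. \<theta> x \<in> B'}" by blast+
  have ne: "{x \<in> A. \<theta> x \<in> B'} \<noteq> A'" using ain a(2) by blast
  have "{x \<in> A. \<theta> x \<in> B'} \<subseteq> A" by blast
  hence eqA: "{x \<in> A. \<theta> x \<in> B'} = A" using simA[OF kth sub1] ne by blast
  have fin: "\<forall>x\<in>A. s2 (- lam) (\<phi> x) + s2 1 (\<psi> x) \<in> B'"
  proof
    fix x assume "x \<in> A"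
    hence "\<theta> x \<in> B'" using eqA by blast
    moreover have "\<theta> x = s2 (- lam) (\<phi> x) + s2 1 (\<psi> x)"
      by (simp add: \<theta>_def M2.V.scale_minus_left)
    ultimately show "s2 (- lam) (\<phi> x) + s2 1 (\<psi> x) \<in> B'" by simp
  qed
  have "((- lam) \<noteq> 0 \<or> (1::complex) \<noteq> 0) \<and> (\<forall>x\<in>A. s2 (- lam) (\<phi> x) + s2 1 (\<psi> x) \<in> B')"
    using fin by simp
  thus ?thesis by (rule exI[where x="- lam", OF exI[where x="1::complex"]])
qed

end


context vector_space
begin

lemma chain_span:
  assumes sub: "\<And>k. k \<le> N \<Longrightarrow> subspace (H k)" and mono: "\<And>k. k < N \<Longrightarrow> H (Suc k) \<subseteq> H k"
    and last: "H N \<subseteq> {0}"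
    and step: "\<And>k x y. k < N \<Longrightarrow> x \<in> H k \<Longrightarrow> y \<in> H k \<Longrightarrow>
                 \<exists>c d. (c \<noteq> 0 \<or> d \<noteq> 0) \<and> scale c x + scale d y \<in> H (Suc k)"
  shows "\<exists>B. finite B \<and> B \<subseteq> H 0 \<and> card B \<le> N \<and> H 0 \<subseteq> span B"
proof -
  have "\<exists>B. finite B \<and> B \<subseteq> H (N - j) \<and> card B \<le> j \<and> H (N - j) \<subseteq> span B" if "j \<le> N" for j
    using that
  proof (induction j)
    case 0
    show ?case using last by (intro exI[of _ "{}"]) auto
  next
    case (Suc j)
    define k where "k = N - Suc j"
    have k: "k < N" "Suc k = N - j" using Suc.prems unfolding k_def by auto
    obtain B where B: "finite B" "B \<subseteq> H (Suc k)" "card B \<le> j" "H (Suc k) \<subseteq> span B"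
      using Suc k by auto
    have BH: "B \<subseteq> H k" using B(2) mono[OF k(1)] by blast
    show ?case
    proof (cases "H k \<subseteq> span B")
      case True
      thus ?thesis using B BH unfolding k_def[symmetric] by (intro exI[of _ B]) auto
    next
      case False
      then obtain x where x: "x \<in> H k" "x \<notin> span B" by blast
      have "H k \<subseteq> span (insert x B)"
      proof
        fix y assume y: "y \<in> H k"
        obtain c d where cd: "c \<noteq> 0 \<or> d \<noteq> 0" "scale c x + scale d y \<in> H (Suc k)"
          using step[OF k(1) x(1) y] by blast
        have sp: "scale c x + scale d y \<in> span B" using cd(2) B(4) by blast
        have d: "d \<noteq> 0"
        proof
          assume d0: "d = 0"
          hence "c \<noteq> 0" using cd(1) by simp
          moreover have "scale c x \<in> span B" using sp d0 by simp
          ultimately have "scale (inverse c) (scale c x) \<in> span B" using span_scale by blast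
          thus False using x(2) \<open>c \<noteq> 0\<close> by (simp add: scale_scale)
        qed
        have "y = scale (inverse d) ((scale c x + scale d y) - scale c x)"
          using d by (simp add: scale_scale)
        moreover have "(scale c x + scale d y) - scale c x \<in> span (insert x B)"
          using sp span_mono[of B "insert x B"] span_base[of x "insert x B"]
          by (intro span_diff span_scale) auto
        ultimately show "y \<in> span (insert x B)" using span_scale by metis
      qed
      moreover have "card (insert x B) \<le> Suc j" using B(1,3) card_insert_le[of B x]
        by (simp add: card_insert_if)
      ultimately show ?thesis using B(1) BH x(1) unfolding k_def[symmetric]
        by (intro exI[of _ "insert x B"]) auto
    qed
  qed
  from this[of N] show ?thesis by simp
qed

end

lemma vs_fun_scale:
  assumes "vector_space s2"
  shows "vector_space (fun_scale s2 :: complex \<Rightarrow> ('v \<Rightarrow> 'w::ab_group_add) \<Rightarrow> ('v \<Rightarrow> 'w))"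
proof -
  interpret W: vector_space s2 by fact
  show ?thesis
    by unfold_locales
       (simp_all add: fun_scale_def fun_eq_iff W.scale_right_distrib W.scale_left_distrib)
qed

context ratpair
begin

sublocale FV: vector_space "fun_scale s2 :: complex \<Rightarrow> ('v \<Rightarrow> 'w) \<Rightarrow> ('v \<Rightarrow> 'w)"
  by (rule vs_fun_scale[OF M2.vs])

lemma Hom_subspace: "FV.subspace Hom"
  unfolding FV.subspace_def
proof (intro conjI ballI allI)
  show "0 \<in> Hom"
    unfolding sl2_hom_def Vector_Spaces.linear_iff using M1.vs M2.vs
    by (simp add: fun_eq_iff M2.e_zero M2.f_zero M2.h_zero)
  show "x + y \<in> Hom" if "x \<in> Hom" "y \<in> Hom" for x y
    unfolding sl2_hom_def Vector_Spaces.linear_iff using M1.vs M2.vs that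
    by (simp add: fun_eq_iff homD M2.e_add M2.f_add M2.h_add M2.V.scale_right_distrib)
  show "fun_scale s2 c x \<in> Hom" if "x \<in> Hom" for c x
    unfolding sl2_hom_def Vector_Spaces.linear_iff using M1.vs M2.vs that
    by (simp add: fun_eq_iff fun_scale_def homD M2.e_scale M2.f_scale M2.h_scale
        M2.V.scale_right_distrib M2.V.scale_scale mult.commute)
qed

lemma hom0: "\<phi> \<in> Hom \<Longrightarrow> \<phi> 0 = 0"
  using homD(2)[of \<phi> 0 0] by simp

definition G :: "(nat \<Rightarrow> 'v set) \<Rightarrow> (nat \<Rightarrow> 'w set) \<Rightarrow> nat \<Rightarrow> nat \<Rightarrow> ('v \<Rightarrow> 'w) set" where
  "G U V i j = {\<phi> \<in> Hom. \<phi> ` U i \<subseteq> {0} \<and> \<phi> ` U (Suc i) \<subseteq> V j}"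

lemma G_subspace:
  assumes "M2.K.subspace (V j)"
  shows "FV.subspace (G U V i j)"
  unfolding FV.subspace_def
proof (intro conjI ballI allI)
  note HS = Hom_subspace
  show "0 \<in> G U V i j" unfolding G_def using FV.subspace_0[OF HS] M2.K.subspace_0[OF assms] by auto
  show "x + y \<in> G U V i j" if "x \<in> G U V i j" "y \<in> G U V i j" for x y
    using that FV.subspace_add[OF HS] M2.K.subspace_add[OF assms] unfolding G_def by (auto simp: image_subset_iff)
  show "fun_scale s2 c x \<in> G U V i j" if "x \<in> G U V i j" for c x
    using that FV.subspace_scale[OF HS] M2.K.subspace_scale[OF assms]
    unfolding G_def by (auto simp: image_subset_iff fun_scale_def M2.s_sK)
qed

theorem main:
  "FV.dim Hom \<le> rational_length s1 e1 f1 h1 * rational_length s2 e2 f2 h2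
   \<and> (\<exists>B. finite B \<and> B \<subseteq> Hom \<and> FV.span B = Hom)"
proof -
  define n where "n = rational_length s1 e1 f1 h1"
  define m where "m = rational_length s2 e2 f2 h2"
  obtain U where U: "U 0 = {0}" "U n = UNIV" "\<forall>i<n. U i \<subset> U (Suc i)" "\<forall>i\<le>n. M1.rsub (U i)"
    using M1.length_chain unfolding M1.chainP_def n_def by blast
  obtain V where V: "V 0 = {0}" "V m = UNIV" "\<forall>i<m. V i \<subset> V (Suc i)" "\<forall>i\<le>m. M2.rsub (V i)"
    using M2.length_chain unfolding M2.chainP_def m_def by blast
  have "\<exists>B. finite B \<and> B \<subseteq> Hom \<and> card B \<le> n * m \<and> Hom \<subseteq> FV.span B"
  proof (cases "m = 0")
    case True
    have "Hom \<subseteq> {0}"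
    proof
      fix \<phi> assume "\<phi> \<in> Hom"
      have "\<phi> x = 0" for x using V True by auto
      thus "\<phi> \<in> {0}" by (auto simp: fun_eq_iff)
    qed
    thus ?thesis by (intro exI[of _ "{}"]) auto
  next
    case False
    hence m0: "m > 0" by simp
    define H where "H k = G U V (k div m) (m - k mod m)" for k
    have GV: "FV.subspace (G U V i j)" if "j \<le> m" for i j
      using G_subspace M2.rsubD(1) V(4) that by blast
    have H0: "H 0 = Hom"
      using U(1) V(2) m0 hom0 unfolding H_def G_def by auto
    have kdecomp: "\<exists>i j. i < n \<and> 1 \<le> j \<and> j \<le> m \<and> H k = G U V i j \<and> H (Suc k) = G U V i (j - 1)"
      if k: "k < n * m" for k
    proof -
      define i where "i = k div m"
      define r where "r = k mod m"
      have kir: "k = i * m + r" "r < m" unfolding i_def r_def using m0 by auto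
      have "i * m < n * m" using k kir by linarith
      hence i: "i < n" using mult_less_cancel2 by blast
      have Hk: "H k = G U V i (m - r)" unfolding H_def i_def r_def ..
      show ?thesis
      proof (cases "Suc r < m")
        case True
        have e: "Suc k = Suc r + i * m" using kir by simp
        have d1: "(Suc r + i * m) div m = i + Suc r div m"
          using div_mult_self1[of m "Suc r" i] m0 by simp
        have d2: "(Suc r + i * m) mod m = Suc r mod m"
          using mod_mult_self1[of "Suc r" i m] by simp
        have "Suc k div m = i" "Suc k mod m = Suc r" unfolding e using d1 d2 True
          by (simp_all only: div_less mod_less)
        hence "H (Suc k) = G U V i (m - Suc r)" unfolding H_def by simp
        hence HS: "H (Suc k) = G U V i ((m - r) - 1)" by (simp add: diff_diff_left)
        have "1 \<le> m - r" "m - r \<le> m" using kir by auto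
        hence "i < n \<and> 1 \<le> m - r \<and> m - r \<le> m \<and> H k = G U V i (m - r) \<and> H (Suc k) = G U V i (m - r - 1)"
          using Hk HS i by simp
        thus ?thesis by (rule exI[where x=i, OF exI[where x="m - r"]])
      next
        case False
        hence r: "Suc r = m" using kir by simp
        have e: "Suc k = m + i * m" using kir r by simp
        have d1: "(m + i * m) div m = i + m div m"
          using div_mult_self1[of m m i] m0 by simp
        have d2: "(m + i * m) mod m = m mod m"
          using mod_mult_self1[of m i m] by simp
        have "Suc k div m = Suc i" "Suc k mod m = 0" unfolding e d1 d2 using m0 by simp_all
        hence "H (Suc k) = G U V (Suc i) m" unfolding H_def by simp
        also have "\<dots> = G U V i 0"
        proof -
          have Ui: "U i \<subseteq> U (Suc i)" using U(3) i by auto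
          show ?thesis
          proof
            show "G U V (Suc i) m \<subseteq> G U V i 0"
            proof
              fix \<phi> assume "\<phi> \<in> G U V (Suc i) m"
              hence p: "\<phi> \<in> Hom" "\<phi> ` U (Suc i) \<subseteq> {0}" unfolding G_def by auto
              have "\<phi> ` U i \<subseteq> {0}" using p(2) Ui by blast
              thus "\<phi> \<in> G U V i 0" using p V(1) unfolding G_def by blast
            qed
            show "G U V i 0 \<subseteq> G U V (Suc i) m"
            proof
              fix \<phi> assume "\<phi> \<in> G U V i 0"
              hence p: "\<phi> \<in> Hom" "\<phi> ` U (Suc i) \<subseteq> {0}" unfolding G_def using V(1) by auto
              thus "\<phi> \<in> G U V (Suc i) m" using V(2) unfolding G_def by blast
            qed
          qed
        qed
        finally have HS: "H (Suc k) = G U V i 0" .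
        have "m - r = 1" using r by simp
        hence Hk': "H k = G U V i 1" using Hk by simp
        have "i < n \<and> 1 \<le> (1::nat) \<and> 1 \<le> m \<and> H k = G U V i 1 \<and> H (Suc k) = G U V i (1 - 1)"
          using Hk' HS i m0 by simp
        thus ?thesis by (rule exI[where x=i, OF exI[where x="1::nat"]])
      qed
    qed
    have "\<exists>B. finite B \<and> B \<subseteq> H 0 \<and> card B \<le> n * m \<and> H 0 \<subseteq> FV.span B"
    proof (rule FV.chain_span)
      fix k assume "k \<le> n * m"
      show "FV.subspace (H k)" unfolding H_def by (rule GV) simp
    next
      fix k assume "k < n * m"
      then obtain i j where ij: "i < n" "1 \<le> j" "j \<le> m" "H k = G U V i j" "H (Suc k) = G U V i (j - 1)"
        using kdecomp by blast
      have jj: "Suc (j - 1) = j" "j - 1 < m" using ij(2,3) by auto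
      have "V (j - 1) \<subset> V (Suc (j - 1))" using V(3) jj(2) by blast
      hence "V (j - 1) \<subseteq> V j" using jj(1) by simp
      thus "H (Suc k) \<subseteq> H k" unfolding ij(4,5) G_def by auto
    next
      show "H (n * m) \<subseteq> {0}"
      proof
        fix \<phi> assume "\<phi> \<in> H (n * m)"
        hence "\<phi> ` U n \<subseteq> {0}" unfolding H_def G_def using m0 by simp
        hence "\<phi> x = 0" for x using U(2) by auto
        thus "\<phi> \<in> {0}" by (auto simp: fun_eq_iff)
      qed
    next
      fix k \<phi> \<psi> assume k: "k < n * m" and \<phi>: "\<phi> \<in> H k" and \<psi>: "\<psi> \<in> H k"
      then obtain i j where ij: "i < n" "1 \<le> j" "j \<le> m" "H k = G U V i j" "H (Suc k) = G U V i (j - 1)"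
        using kdecomp by blast
      have \<phi>G: "\<phi> \<in> Hom" "\<phi> ` U i \<subseteq> {0}" "\<phi> ` U (Suc i) \<subseteq> V j"
        using \<phi> ij(4) unfolding G_def by auto
      have \<psi>G: "\<psi> \<in> Hom" "\<psi> ` U i \<subseteq> {0}" "\<psi> ` U (Suc i) \<subseteq> V j"
        using \<psi> ij(4) unfolding G_def by auto
      have rsA: "M1.rsub (U (Suc i))" "M1.rsub (U i)" using U(4) ij(1) by auto
      have sA: "U i \<subseteq> U (Suc i)" "U i \<noteq> U (Suc i)" using U(3) ij(1) by auto
      have rsB: "M2.rsub (V j)" "M2.rsub (V (j - 1))" using V(4) ij(3) by auto
      have jj: "Suc (j - 1) = j" "j - 1 < m" using ij(2,3) by auto
      have "V (j - 1) \<subset> V (Suc (j - 1))" using V(3) jj(2) by blast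
      hence sB: "V (j - 1) \<subseteq> V j" using jj(1) by simp
      have simA: "Y = U i \<or> Y = U (Suc i)" if "M1.rsub Y" "U i \<subseteq> Y" "Y \<subseteq> U (Suc i)" for Y
        using M1.max_chain_simple[OF U(1) U(2) U(3) U(4) n_def ij(1) that] .
      have simB: "Y = V (j - 1) \<or> Y = V j" if "M2.rsub Y" "V (j - 1) \<subseteq> Y" "Y \<subseteq> V j" for Y
        using M2.max_chain_simple[OF V(1) V(2) V(3) V(4) m_def jj(2) that(1) that(2)] that(3) jj(1) by simp
      have z: "0 \<in> V (j - 1)" using M2.K.subspace_0 M2.rsubD(1)[OF rsB(2)] by blast
      have \<phi>A': "\<phi> ` U i \<subseteq> V (j - 1)" and \<psi>A': "\<psi> ` U i \<subseteq> V (j - 1)" using \<phi>G(2) \<psi>G(2) z by auto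
      obtain c d where cd: "c \<noteq> 0 \<or> d \<noteq> 0" "\<forall>a\<in>U (Suc i). s2 c (\<phi> a) + s2 d (\<psi> a) \<in> V (j - 1)"
        using local_schur[OF rsA(1) rsA(2) sA simA rsB(1) rsB(2) sB simB \<phi>G(1) \<psi>G(1) \<phi>G(3) \<phi>A' \<psi>G(3) \<psi>A'] by blast
      have "fun_scale s2 c \<phi> + fun_scale s2 d \<psi> \<in> Hom"
        using Hom_subspace \<phi>G(1) \<psi>G(1) FV.subspace_add FV.subspace_scale by blast
      moreover have "(fun_scale s2 c \<phi> + fun_scale s2 d \<psi>) ` U i \<subseteq> {0}"
        using \<phi>G(2) \<psi>G(2) by (auto simp: fun_scale_def image_subset_iff)
      moreover have "(fun_scale s2 c \<phi> + fun_scale s2 d \<psi>) ` U (Suc i) \<subseteq> V (j - 1)"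
        using cd(2) by (auto simp: fun_scale_def)
      ultimately have "fun_scale s2 c \<phi> + fun_scale s2 d \<psi> \<in> H (Suc k)"
        unfolding ij(5) G_def by blast
      thus "\<exists>c d. (c \<noteq> 0 \<or> d \<noteq> 0) \<and> fun_scale s2 c \<phi> + fun_scale s2 d \<psi> \<in> H (Suc k)"
        using cd(1) by blast
    qed
    thus ?thesis using H0 by simp
  qed
  then obtain B where B: "finite B" "B \<subseteq> Hom" "card B \<le> n * m" "Hom \<subseteq> FV.span B" by blast
  have "FV.span B = Hom"
    using B(2,4) FV.span_minimal[OF B(2) Hom_subspace] by blast
  moreover have "FV.dim Hom \<le> card B" by (rule FV.dim_le_card[OF B(4) B(1)])
  ultimately show ?thesis using B unfolding n_def m_def by auto
qed

end



theorem theorem6p20: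
  fixes s1 :: "complex \<Rightarrow> 'v::ab_group_add \<Rightarrow> 'v" and e1 f1 h1 :: "'v \<Rightarrow> 'v"
    and s2 :: "complex \<Rightarrow> 'w::ab_group_add \<Rightarrow> 'w" and e2 f2 h2 :: "'w \<Rightarrow> 'w"
  assumes "rational_sl2_module s1 e1 f1 h1"
    and "rational_sl2_module s2 e2 f2 h2"
  shows "vector_space.dim (fun_scale s2) (sl2_hom s1 e1 f1 h1 s2 e2 f2 h2)
           \<le> rational_length s1 e1 f1 h1 * rational_length s2 e2 f2 h2
         \<and> (\<exists>B. finite B \<and> B \<subseteq> sl2_hom s1 e1 f1 h1 s2 e2 f2 h2 \<and>
               module.span (fun_scale s2) B = sl2_hom s1 e1 f1 h1 s2 e2 f2 h2)"
proof -
  interpret P: ratpair s1 e1 f1 h1 s2 e2 f2 h2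
    by (intro ratpair.intro ratmod.intro assms)
  show ?thesis by (rule P.main)
qed

end
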